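(* Assume Conditions $\mathcal M$. Then for every $p>0$ there exist constants $c>0$ and $d>0$ such that for all $\varepsilon\in(0,1]$ and all $u\in\mathbb U_\varepsilon$ with $|u|\ge d$, $$\mathbf E_{\vartheta_0}\hat Z_\varepsilon(u)^p\le e^{-cu^2}.$$
   Context: Fix $T>0$, $0<\alpha<\beta<T$, $\Theta=(\alpha,\beta)$, and a true value $\vartheta_0\in\Theta$. The observed process is $X_t=\int_0^tS(\vartheta_0,s)\,ds+\varepsilon W_t$, $0\le t\le T$, where $W$ is a standard Wiener process, $\varepsilon\in(0,1]$ and $S(\vartheta_0,\cdot)\in L^2(0,T)$. The statistician uses the misspecified model ${\rm d}X_t=M(\vartheta,t){\rm d}t+\varepsilon{\rm d}W_t$ with $M(\vartheta,t)=h(t)\mathbf 1_{\{t<\vartheta\}}+g(t)\mathbf 1_{\{t\ge\vartheta\}}$, where $h,g$ are bounded measurable functions on $[0,T]$. The pseudo-likelihood is $V(\vartheta,X^T)=\exp\{\varepsilon^{-2}\int_0^TM(\vartheta,t){\rm d}X_t-\frac1{2\varepsilon^2}\int_0^TM(\vartheta,t)^2{\rm d}t\}$. Put $\delta(t)=h(t)-g(t)$, $\Phi(\vartheta)=\int_0^T[M(\vartheta,t)-S(\vartheta_0,t)]^2{\rm d}t$, and $$\ddot\Phi(\vartheta)=2[h(\vartheta)-S(\vartheta_0,\vartheta)][h'(\vartheta)-\partial_tS(\vartheta_0,\vartheta)]-2[g(\vartheta)-S(\vartheta_0,\vartheta)][g'(\vartheta)-\partial_tS(\vartheta_0,\vartheta)]$$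 (derivatives in $t$). Conditions $\mathcal M$: (1) $\inf_{t\in\Theta}\delta(t)>0$; (2) $\Phi$ has a unique point of minimum $\hat\vartheta$ over $\Theta$; (3) $h,g$ and $t\mapsto S(\vartheta_0,t)$ are continuously differentiable in $t$ on $\Theta$; (4) $\inf_{\vartheta\in\Theta}\ddot\Phi(\vartheta)>0$. Define $Z_\varepsilon(u)=V(\hat\vartheta+\varepsilon^{2/3}u,X^T)/V(\hat\vartheta,X^T)$ for $u\in\mathbb U_\varepsilon=((\alpha-\hat\vartheta)\varepsilon^{-2/3},(\beta-\hat\vartheta)\varepsilon^{-2/3})$, and $\hat Z_\varepsilon(u)=Z_\varepsilon(u)^{\varepsilon^{2/3}}$. *)

theory Defs
  imports "HOL-Probability.Probability"
begin

definition wiener_process :: "'a measure \<Rightarrow> (real \<Rightarrow> 'a \<Rightarrow> real) \<Rightarrow> bool" where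
  "wiener_process P W \<longleftrightarrow> prob_space P \<and> (\<forall>t. W t \<in> borel_measurable P)
    \<and> (AE \<omega> in P. W 0 \<omega> = 0)
    \<and> (AE \<omega> in P. continuous_on {0..} (\<lambda>t. W t \<omega>))
    \<and> (\<forall>s t. 0 \<le> s \<and> s < t \<longrightarrow>
          distributed P lborel (\<lambda>\<omega>. W t \<omega> - W s \<omega>) (normal_density 0 (sqrt (t - s))))
    \<and> (\<forall>ts::real list. sorted ts \<and> (\<forall>t\<in>set ts. 0 \<le> t) \<longrightarrow>
          prob_space.indep_vars P (\<lambda>_. borel) (\<lambda>i \<omega>. W (ts ! Suc i) \<omega> - W (ts ! i) \<omega>) {..<length ts - 1})"

definition admissible_partition :: "real \<Rightarrow> real list \<Rightarrow> real list \<Rightarrow> bool" where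
  "admissible_partition T ts cs \<longleftrightarrow> sorted_wrt (<) ts \<and> length ts \<ge> 2 \<and> hd ts = 0 \<and> last ts = T
     \<and> length cs = length ts - 1"

definition step_fun :: "real list \<Rightarrow> real list \<Rightarrow> real \<Rightarrow> real" where
  "step_fun ts cs t = (\<Sum>i<length ts - 1. cs ! i * indicator {ts ! i ..< ts ! Suc i} t)"

definition step_wiener :: "(real \<Rightarrow> 'a \<Rightarrow> real) \<Rightarrow> real list \<Rightarrow> real list \<Rightarrow> 'a \<Rightarrow> real" where
  "step_wiener W ts cs \<omega> = (\<Sum>i<length ts - 1. cs ! i * (W (ts ! Suc i) \<omega> - W (ts ! i) \<omega>))"

text \<open>I is (a version of) the Wiener integral of the deterministic function f over [0,T]:
  the L2(P)-limit of Wiener integrals of step functions converging to f in L2(0,T).\<close>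
definition wiener_integral ::
  "'a measure \<Rightarrow> (real \<Rightarrow> 'a \<Rightarrow> real) \<Rightarrow> real \<Rightarrow> (real \<Rightarrow> real) \<Rightarrow> ('a \<Rightarrow> real) \<Rightarrow> bool" where
  "wiener_integral P W T f I \<longleftrightarrow> I \<in> borel_measurable P \<and>
    (\<exists>tss css. (\<forall>n. admissible_partition T (tss n) (css n)) \<and>
      ((\<lambda>n. \<integral>\<^sup>+ t. indicator {0..T} t * ennreal ((step_fun (tss n) (css n) t - f t)^2) \<partial>lborel)
          \<longlonglongrightarrow> 0) \<and>
      ((\<lambda>n. \<integral>\<^sup>+ \<omega>. ennreal ((step_wiener W (tss n) (css n) \<omega> - I \<omega>)^2) \<partial>P) \<longlonglongrightarrow> 0))"

definition cp_model :: "(real \<Rightarrow> real) \<Rightarrow> (real \<Rightarrow> real) \<Rightarrow> real \<Rightarrow> real \<Rightarrow> real" where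
  "cp_model h g \<theta> t = (if t < \<theta> then h t else g t)"

definition Phi :: "real \<Rightarrow> (real \<Rightarrow> real) \<Rightarrow> (real \<Rightarrow> real) \<Rightarrow> (real \<Rightarrow> real) \<Rightarrow> real \<Rightarrow> real" where
  "Phi T h g S0 \<theta> = (LINT t:{0..T}|lborel. (cp_model h g \<theta> t - S0 t)^2)"

definition Phi_dd :: "(real \<Rightarrow> real) \<Rightarrow> (real \<Rightarrow> real) \<Rightarrow> (real \<Rightarrow> real) \<Rightarrow> (real \<Rightarrow> real)
    \<Rightarrow> (real \<Rightarrow> real) \<Rightarrow> (real \<Rightarrow> real) \<Rightarrow> real \<Rightarrow> real" where
  "Phi_dd h h' g g' S0 S0' \<theta> = 2 * (h \<theta> - S0 \<theta>) * (h' \<theta> - S0' \<theta>) - 2 * (g \<theta> - S0 \<theta>) * (g' \<theta> - S0' \<theta>)"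

text \<open>Pseudo-likelihood V(theta, X^T), where int M(theta,t) dX_t
  = int M(theta,t) S0(t) dt + eps * I theta, with I theta the Wiener integral of M(theta,.).\<close>
definition pseudo_lik :: "real \<Rightarrow> (real \<Rightarrow> real) \<Rightarrow> (real \<Rightarrow> real) \<Rightarrow> (real \<Rightarrow> real) \<Rightarrow> real
    \<Rightarrow> (real \<Rightarrow> 'a \<Rightarrow> real) \<Rightarrow> real \<Rightarrow> 'a \<Rightarrow> real" where
  "pseudo_lik T h g S0 \<epsilon> I \<theta> \<omega> =
     exp (1 / \<epsilon>^2 * ((LINT t:{0..T}|lborel. cp_model h g \<theta> t * S0 t) + \<epsilon> * I \<theta> \<omega>)
          - 1 / (2 * \<epsilon>^2) * (LINT t:{0..T}|lborel. (cp_model h g \<theta> t)^2))"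

definition Z_eps where
  "Z_eps T h g S0 \<epsilon> I \<theta>h u \<omega> =
     pseudo_lik T h g S0 \<epsilon> I (\<theta>h + \<epsilon> powr (2/3) * u) \<omega> / pseudo_lik T h g S0 \<epsilon> I \<theta>h \<omega>"

definition Z_hat where
  "Z_hat T h g S0 \<epsilon> I \<theta>h u \<omega> = (Z_eps T h g S0 \<epsilon> I \<theta>h u \<omega>) powr (\<epsilon> powr (2/3))"

end

theory Submission
  imports Defs
begin

lemma sw_le: "sorted_wrt (<) (xs::real list) \<Longrightarrow> i \<le> j \<Longrightarrow> j < length xs \<Longrightarrow> xs!i \<le> xs!j"
  by (metis less_eq_real_def order_le_imp_less_or_eq sorted_wrt_nth_less)

lemma sw_lt: "sorted_wrt (<) (xs::real list) \<Longrightarrow> i < j \<Longrightarrow> j < length xs \<Longrightarrow> xs!i < xs!j"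
  by (simp add: sorted_wrt_nth_less)

lemma sw_lt_rev: "sorted_wrt (<) (xs::real list) \<Longrightarrow> xs!i < xs!j \<Longrightarrow> i < length xs \<Longrightarrow> j < length xs \<Longrightarrow> i < j"
  by (meson leI linorder_not_less sw_le)

lemma step_fun_eval:
  assumes s: "sorted_wrt (<) ts" and i: "i < length ts - 1" and t: "ts!i \<le> t" "t < ts!Suc i"
  shows "step_fun ts cs t = cs!i"
proof -
  have "step_fun ts cs t = (\<Sum>k<length ts - 1. if k = i then cs!i else 0)"
    unfolding step_fun_def
  proof (rule sum.cong)
    fix k assume k: "k \<in> {..<length ts - 1}"
    show "cs ! k * indicator {ts ! k..<ts ! Suc k} t = (if k = i then cs ! i else 0)"
    proof (cases "k = i")
      case True thus ?thesis using t by (simp add: indicator_def)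
    next
      case False
      show ?thesis
      proof (cases "k < i")
        case True
        then have "ts!Suc k \<le> ts!i" using sw_le[OF s, of "Suc k" i] i by auto
        thus ?thesis using False t by (simp add: indicator_def)
      next
        case False2: False
        then have "ts!Suc i \<le> ts!k" using sw_le[OF s, of "Suc i" k] k False by auto
        thus ?thesis using False t by (simp add: indicator_def)
      qed
    qed
  qed simp
  also have "\<dots> = cs!i" using i by simp
  finally show ?thesis .
qed

lemma adm_basic:
  assumes "admissible_partition T ts cs"
  shows "sorted_wrt (<) ts" "ts!0 = 0" "ts!(length ts - 1) = T" "length ts \<ge> 2"
    "length cs = length ts - 1"
    "\<And>i. i < length ts \<Longrightarrow> 0 \<le> ts!i \<and> ts!i \<le> T"
proof -
  show s: "sorted_wrt (<) ts" and l: "length ts \<ge> 2" and "length cs = length ts - 1"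
    using assms by (auto simp: admissible_partition_def)
  show h: "ts!0 = 0" using assms l by (cases ts) (auto simp: admissible_partition_def)
  show la: "ts!(length ts - 1) = T" using assms l by (cases "ts = []") (auto simp: admissible_partition_def last_conv_nth)
  fix i assume "i < length ts"
  then show "0 \<le> ts!i \<and> ts!i \<le> T"
    using sw_le[OF s, of 0 i] sw_le[OF s, of i "length ts - 1"] h la by auto
qed

lemma adm_find:
  assumes a: "admissible_partition T ts cs" and t: "0 \<le> t" "t < T"
  shows "\<exists>i < length ts - 1. ts!i \<le> t \<and> t < ts!Suc i"
proof -
  note b = adm_basic[OF a]
  define K where "K = {k. k < length ts - 1 \<and> ts!k \<le> t}"
  have fin: "finite K" unfolding K_def by auto
  have ne: "0 \<in> K" using b t unfolding K_def by auto
  define i where "i = Max K"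
  have iK: "i \<in> K" using fin ne i_def Max_in by blast
  have ts_t: "t < ts!Suc i"
  proof (cases "Suc i < length ts - 1")
    case True
    have "Suc i \<notin> K" using Max_ge[OF fin] i_def by fastforce
    then show ?thesis using True unfolding K_def by auto
  next
    case False
    then have "Suc i = length ts - 1" using iK unfolding K_def by auto
    then show ?thesis using b t by simp
  qed
  show ?thesis using iK ts_t unfolding K_def by blast
qed

locale refine =
  fixes T :: real and ts cs us :: "real list"
  assumes adm: "admissible_partition T ts cs"
    and us_s: "sorted_wrt (<) us" and us_T: "set us \<subseteq> {0..T}" and sub: "set ts \<subseteq> set us"
begin

lemma us_bound: "j < length us \<Longrightarrow> 0 \<le> us!j \<and> us!j \<le> T"
proof -
  assume "j < length us"
  then have "us!j \<in> set us" by (rule nth_mem)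
  then show ?thesis using us_T by auto
qed

lemma const:
  assumes j: "Suc j < length us" and t: "us!j \<le> t" "t < us!Suc j"
  shows "step_fun ts cs t = step_fun ts cs (us!j)"
proof -
  note b = adm_basic[OF adm]
  have "us!j < us!Suc j" using sw_lt[OF us_s] j by auto
  then have "0 \<le> us!j" "us!j < T" using us_bound[of j] us_bound[of "Suc j"] j by auto
  then obtain i where i: "i < length ts - 1" "ts!i \<le> us!j" "us!j < ts!Suc i"
    using adm_find[OF adm] by blast
  have "ts!Suc i \<in> set us" using sub i(1) by auto
  then obtain k where k: "k < length us" "us!k = ts!Suc i" by (auto simp: in_set_conv_nth)
  have "j < k" using sw_lt_rev[OF us_s, of j k] k i j by auto
  then have "us!Suc j \<le> us!k" using sw_le[OF us_s, of "Suc j" k] k by auto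
  then have "t < ts!Suc i" using t k by auto
  then have "step_fun ts cs t = cs!i" using step_fun_eval[OF b(1) i(1)] i t by auto
  moreover have "step_fun ts cs (us!j) = cs!i" using step_fun_eval[OF b(1) i(1)] i by auto
  ultimately show ?thesis by simp
qed

lemma sum_refine:
  fixes w :: "real \<Rightarrow> real"
  shows "(\<Sum>i<length ts - 1. cs!i * (w (ts!Suc i) - w (ts!i)))
       = (\<Sum>j<length us - 1. step_fun ts cs (us!j) * (w (us!Suc j) - w (us!j)))"
proof -
  note b = adm_basic[OF adm]
  define n where "n = length ts - 1"
  define m where "m = length us - 1"
  have ex: "\<forall>i. \<exists>j. i < length ts \<longrightarrow> j < length us \<and> us!j = ts!i"
  proof
    fix i show "\<exists>j. i < length ts \<longrightarrow> j < length us \<and> us!j = ts!i"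
    proof (cases "i < length ts")
      case True
      then have "ts!i \<in> set us" using sub nth_mem by blast
      then show ?thesis by (auto simp: in_set_conv_nth)
    qed simp
  qed
  then obtain idx where idx': "\<forall>i. i < length ts \<longrightarrow> idx i < length us \<and> us!(idx i) = ts!i"
    using choice[OF ex] by blast
  have idx: "\<And>i. i < length ts \<Longrightarrow> idx i < length us \<and> us!(idx i) = ts!i" using idx' by blast
  have mono: "idx i < idx i'" if "i < i'" "i' < length ts" for i i'
  proof -
    have "ts!i < ts!i'" using sw_lt[OF b(1)] that by auto
    then show ?thesis using idx[of i] idx[of i'] that sw_lt_rev[OF us_s] by auto
  qed
  have lts: "0 < length ts" "ts \<noteq> []" using b(4) by (linarith, auto)
  then have lus: "length us > 0" using idx[of 0] by auto
  have idx0: "idx 0 = 0"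
  proof (rule ccontr)
    assume "idx 0 \<noteq> 0"
    then have "us!0 < us!(idx 0)" using sw_lt[OF us_s, of 0 "idx 0"] idx[of 0] b lts by auto
    moreover have "us!(idx 0) = 0" using idx[of 0] b lts by auto
    ultimately show False using us_bound[of 0] lus by auto
  qed
  have idxn: "idx n = m"
  proof (rule ccontr)
    assume "idx n \<noteq> m"
    moreover have "idx n < length us" using idx[of n] b n_def lts by auto
    ultimately have "idx n < m" using m_def by auto
    then have "us!(idx n) < us!m" using sw_lt[OF us_s, of "idx n" m] m_def lus by auto
    moreover have "us!(idx n) = T" using idx[of n] b n_def lts by auto
    ultimately show False using us_bound[of m] lus m_def by auto
  qed
  have ind: "k \<le> n \<Longrightarrow> (\<Sum>j<idx k. step_fun ts cs (us!j) * (w (us!Suc j) - w (us!j)))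
      = (\<Sum>i<k. cs!i * (w (ts!Suc i) - w (ts!i)))" for k
  proof (induction k)
    case 0 then show ?case using idx0 by simp
  next
    case (Suc k)
    have kn: "k < n" using Suc by auto
    have skt: "Suc k < length ts" "k < length ts" using kn n_def by linarith+
    have le: "idx k \<le> idx (Suc k)" using mono[of k "Suc k"] kn n_def skt by auto
    have "(\<Sum>j<idx (Suc k). step_fun ts cs (us!j) * (w (us!Suc j) - w (us!j)))
        = (\<Sum>j<idx k. step_fun ts cs (us!j) * (w (us!Suc j) - w (us!j)))
          + (\<Sum>j=idx k..<idx (Suc k). step_fun ts cs (us!j) * (w (us!Suc j) - w (us!j)))"
      using le by (simp add: lessThan_atLeast0 sum.atLeastLessThan_concat)
    also have "(\<Sum>j=idx k..<idx (Suc k). step_fun ts cs (us!j) * (w (us!Suc j) - w (us!j)))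
        = (\<Sum>j=idx k..<idx (Suc k). cs!k * (w (us!Suc j) - w (us!j)))"
    proof (rule sum.cong)
      fix j assume j: "j \<in> {idx k..<idx (Suc k)}"
      have isk: "idx (Suc k) < length us" using idx[of "Suc k"] kn n_def skt by auto
      have "us!(idx k) \<le> us!j" using sw_le[OF us_s, of "idx k" j] j isk by auto
      moreover have "us!j < us!(idx (Suc k))" using sw_lt[OF us_s, of j "idx (Suc k)"] j isk by auto
      ultimately have "ts!k \<le> us!j" "us!j < ts!Suc k" using idx[of k] idx[of "Suc k"] kn n_def skt by auto
      then show "step_fun ts cs (us!j) * (w (us!Suc j) - w (us!j)) = cs!k * (w (us!Suc j) - w (us!j))"
        using step_fun_eval[OF b(1), of k "us!j" cs] kn n_def skt by simp
    qed simp
    also have "\<dots> = cs!k * (\<Sum>j=idx k..<idx (Suc k). (w (us!Suc j) - w (us!j)))"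
      by (simp add: sum_distrib_left)
    also have "(\<Sum>j=idx k..<idx (Suc k). (w (us!Suc j) - w (us!j))) = w (us!(idx (Suc k))) - w (us!(idx k))"
      using sum_Suc_diff'[OF le, of "\<lambda>j. w (us!j)"] by simp
    also have "\<dots> = w (ts!Suc k) - w (ts!k)" using idx[of k] idx[of "Suc k"] kn n_def skt by auto
    finally show ?case using Suc by simp
  qed
  show ?thesis using ind[of n] idxn n_def m_def by simp
qed

end

lemma nd_one: "0 < \<sigma> \<Longrightarrow> (\<integral>\<^sup>+ x. ennreal (normal_density \<mu> \<sigma> x) \<partial>lborel) = 1"
  by (subst nn_integral_eq_integral) (auto simp: integral_normal_density)

lemma nd_shift:
  assumes s: "0 < \<sigma>"
  shows "normal_density 0 \<sigma> x * exp (a * x) = exp (a^2 * \<sigma>^2 / 2) * normal_density (a * \<sigma>^2) \<sigma> x"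
proof -
  have "- (x - 0)\<^sup>2 / (2 * \<sigma>\<^sup>2) + a * x = - (x - a * \<sigma>^2)\<^sup>2 / (2 * \<sigma>\<^sup>2) + a^2 * \<sigma>^2 / 2"
    using s by (simp add: field_simps power2_eq_square)
  then have "exp (- (x - 0)\<^sup>2 / (2 * \<sigma>\<^sup>2)) * exp (a * x) = exp (a^2 * \<sigma>^2 / 2) * exp (- (x - a * \<sigma>^2)\<^sup>2 / (2 * \<sigma>\<^sup>2))"
    by (metis exp_add mult.commute)
  then show ?thesis unfolding normal_density_def by (simp add: algebra_simps)
qed

lemma normal_mgf:
  assumes d: "distributed P lborel X (normal_density 0 \<sigma>)" and s: "0 < \<sigma>"
  shows "(\<integral>\<^sup>+ \<omega>. ennreal (exp (a * X \<omega>)) \<partial>P) = ennreal (exp (a^2 * \<sigma>^2 / 2))"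
proof -
  have "(\<integral>\<^sup>+ \<omega>. ennreal (exp (a * X \<omega>)) \<partial>P)
      = (\<integral>\<^sup>+ x. ennreal (normal_density 0 \<sigma> x) * ennreal (exp (a * x)) \<partial>lborel)"
    using distributed_nn_integral[OF d, of "\<lambda>x. ennreal (exp (a * x))"] by simp
  also have "\<dots> = (\<integral>\<^sup>+ x. ennreal (exp (a^2 * \<sigma>^2 / 2)) * ennreal (normal_density (a * \<sigma>^2) \<sigma> x) \<partial>lborel)"
    by (intro nn_integral_cong) (simp add: ennreal_mult'[symmetric] nd_shift[OF s])
  also have "\<dots> = ennreal (exp (a^2 * \<sigma>^2 / 2)) * (\<integral>\<^sup>+ x. ennreal (normal_density (a * \<sigma>^2) \<sigma> x) \<partial>lborel)"
    by (rule nn_integral_cmult) simp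
  also have "\<dots> = ennreal (exp (a^2 * \<sigma>^2 / 2))" using nd_one[OF s] by simp
  finally show ?thesis .
qed

lemma wiener_mgf:
  assumes wp: "wiener_process P W" and us: "sorted_wrt (<) us" "\<forall>t\<in>set us. 0 \<le> t"
  shows "(\<integral>\<^sup>+ \<omega>. ennreal (exp (\<Sum>j<length us - 1. a j * (W (us!Suc j) \<omega> - W (us!j) \<omega>))) \<partial>P)
       = ennreal (exp (\<Sum>j<length us - 1. (a j)^2 * (us!Suc j - us!j) / 2))"
proof -
  interpret prob_space P using wp by (simp add: wiener_process_def)
  define m where "m = length us - 1"
  have ind0: "indep_vars (\<lambda>_. borel) (\<lambda>i \<omega>. W (us ! Suc i) \<omega> - W (us ! i) \<omega>) {..<m}"
    using wp us unfolding wiener_process_def m_def using sorted_wrt_mono_rel[of _ "(<)" "(\<le>)"]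
    by (metis (no_types, lifting) less_imp_le sorted_wrt_mono_rel)
  have ind: "indep_vars (\<lambda>_. borel) (\<lambda>i \<omega>. ennreal (exp (a i * (W (us ! Suc i) \<omega> - W (us ! i) \<omega>)))) {..<m}"
    by (rule indep_vars_compose2[OF ind0]) simp
  have "(\<integral>\<^sup>+ \<omega>. ennreal (exp (\<Sum>j<m. a j * (W (us!Suc j) \<omega> - W (us!j) \<omega>))) \<partial>P)
      = (\<integral>\<^sup>+ \<omega>. (\<Prod>j<m. ennreal (exp (a j * (W (us!Suc j) \<omega> - W (us!j) \<omega>)))) \<partial>P)"
    by (intro nn_integral_cong) (simp add: exp_sum prod_ennreal)
  also have "\<dots> = (\<Prod>j<m. \<integral>\<^sup>+ \<omega>. ennreal (exp (a j * (W (us!Suc j) \<omega> - W (us!j) \<omega>))) \<partial>P)"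
    by (rule indep_vars_nn_integral[OF _ ind]) auto
  also have "\<dots> = (\<Prod>j<m. ennreal (exp ((a j)^2 * (us!Suc j - us!j) / 2)))"
  proof (rule prod.cong)
    fix j assume j: "j \<in> {..<m}"
    have lt: "us!j < us!Suc j" using sorted_wrt_nth_less[OF us(1), of j "Suc j"] j m_def by auto
    have nn: "0 \<le> us!j" using us(2) j m_def by auto
    have d: "distributed P lborel (\<lambda>\<omega>. W (us!Suc j) \<omega> - W (us!j) \<omega>) (normal_density 0 (sqrt (us!Suc j - us!j)))"
      using wp lt nn unfolding wiener_process_def by blast
    show "(\<integral>\<^sup>+ \<omega>. ennreal (exp (a j * (W (us!Suc j) \<omega> - W (us!j) \<omega>))) \<partial>P) = ennreal (exp ((a j)^2 * (us!Suc j - us!j) / 2))"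
      using normal_mgf[OF d, of "a j"] lt by simp
  qed simp
  also have "\<dots> = ennreal (exp (\<Sum>j<m. (a j)^2 * (us!Suc j - us!j) / 2))"
    by (simp add: exp_sum prod_ennreal)
  finally show ?thesis unfolding m_def .
qed

lemma step_integral:
  fixes G :: "real \<Rightarrow> ennreal"
  assumes us: "sorted_wrt (<) us" and l: "0 < length us" and h: "us!0 = 0" and la: "us!(length us - 1) = T"
    and const: "\<And>j t. Suc j < length us \<Longrightarrow> us!j \<le> t \<Longrightarrow> t < us!Suc j \<Longrightarrow> G t = G (us!j)"
  shows "(\<integral>\<^sup>+ t. indicator {0..T} t * G t \<partial>lborel)
       = (\<Sum>j<length us - 1. G (us!j) * ennreal (us!Suc j - us!j))"
proof -
  define m where "m = length us - 1"
  have pw: "k \<le> m \<Longrightarrow> indicator {us!0..<us!k} t * G t = (\<Sum>j<k. indicator {us!j..<us!Suc j} t * G (us!j))" for k t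
  proof (induction k)
    case 0 then show ?case by simp
  next
    case (Suc k)
    have km: "Suc k < length us" using Suc m_def l by linarith
    have le0: "us!0 \<le> us!k" using sw_le[OF us, of 0 k] km by auto
    have lt: "us!k < us!Suc k" using sw_lt[OF us, of k "Suc k"] km by auto
    have "indicator {us!0..<us!Suc k} t * G t
        = indicator {us!0..<us!k} t * G t + indicator {us!k..<us!Suc k} t * G (us!k)"
    proof (cases "t < us!k")
      case True then show ?thesis using lt by (simp add: indicator_def)
    next
      case False
      then show ?thesis using le0 lt const[OF km, of t] by (simp add: indicator_def)
    qed
    then show ?case using Suc by simp
  qed
  have "AE t in lborel. indicator {0..T} t * G t = indicator {us!0..<us!m} t * G t"
    using AE_lborel_singleton[of T] by eventually_elim (auto simp: h la[folded m_def] indicator_def)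
  then have "(\<integral>\<^sup>+ t. indicator {0..T} t * G t \<partial>lborel) = (\<integral>\<^sup>+ t. indicator {us!0..<us!m} t * G t \<partial>lborel)"
    by (rule nn_integral_cong_AE)
  also have "\<dots> = (\<integral>\<^sup>+ t. (\<Sum>j<m. G (us!j) * indicator {us!j..<us!Suc j} t) \<partial>lborel)"
    using pw[of m] by (simp add: mult.commute)
  also have "\<dots> = (\<Sum>j<m. \<integral>\<^sup>+ t. G (us!j) * indicator {us!j..<us!Suc j} t \<partial>lborel)"
    by (rule nn_integral_sum) simp
  also have "\<dots> = (\<Sum>j<m. G (us!j) * ennreal (us!Suc j - us!j))"
  proof (rule sum.cong)
    fix j assume j: "j \<in> {..<m}"
    have lt: "us!j < us!Suc j" using sw_lt[OF us, of j "Suc j"] j m_def by auto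
    show "(\<integral>\<^sup>+ t. G (us!j) * indicator {us!j..<us!Suc j} t \<partial>lborel) = G (us!j) * ennreal (us!Suc j - us!j)"
      using lt by (subst nn_integral_cmult_indicator) auto
  qed simp
  finally show ?thesis unfolding m_def .
qed

lemma step_gauss:
  assumes wp: "wiener_process P W"
    and a1: "admissible_partition T ts1 cs1" and a2: "admissible_partition T ts2 cs2"
  shows "\<exists>V\<ge>0. (\<integral>\<^sup>+ t. indicator {0..T} t * ennreal ((step_fun ts1 cs1 t - step_fun ts2 cs2 t)^2) \<partial>lborel) = ennreal V
     \<and> (\<integral>\<^sup>+ \<omega>. ennreal (exp (lam * (step_wiener W ts1 cs1 \<omega> - step_wiener W ts2 cs2 \<omega>))) \<partial>P) = ennreal (exp (lam^2 / 2 * V))"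
proof -
  note b1 = adm_basic[OF a1] and b2 = adm_basic[OF a2]
  define us where "us = sorted_list_of_set (set ts1 \<union> set ts2)"
  have us_s: "sorted_wrt (<) us" unfolding us_def by (rule strict_sorted_list_of_set)
  have set_us: "set us = set ts1 \<union> set ts2" unfolding us_def by simp
  have us_T: "set us \<subseteq> {0..T}"
  proof
    fix x assume "x \<in> set us"
    then have "x \<in> set ts1 \<or> x \<in> set ts2" using set_us by auto
    then show "x \<in> {0..T}" using b1(6) b2(6) by (auto simp: in_set_conv_nth)
  qed
  have l1: "0 < length ts1" using b1(4) by linarith
  have l1': "length ts1 - 1 < length ts1" using b1(4) by linarith
  have "0 \<in> set us" using set_us b1(2) l1 by (metis UnI1 nth_mem)
  then obtain k0 where k0: "k0 < length us" "us!k0 = 0" by (auto simp: in_set_conv_nth)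
  have "T \<in> set us" using set_us b1(3) l1' by (metis UnI1 nth_mem)
  then obtain kT where kT: "kT < length us" "us!kT = T" by (auto simp: in_set_conv_nth)
  have lus: "0 < length us" using k0 by auto
  have bnd: "\<And>j. j < length us \<Longrightarrow> 0 \<le> us!j \<and> us!j \<le> T"
  proof -
    fix j assume "j < length us"
    then have "us!j \<in> set us" by (rule nth_mem)
    then show "0 \<le> us!j \<and> us!j \<le> T" using us_T by auto
  qed
  have h0: "us!0 = 0" using sw_le[OF us_s, of 0 k0] k0 bnd[of 0] lus by auto
  have hT: "us!(length us - 1) = T" using sw_le[OF us_s, of kT "length us - 1"] kT bnd[of "length us - 1"] lus by auto
  interpret r1: refine T ts1 cs1 us by unfold_locales (use a1 us_s us_T set_us in auto)
  interpret r2: refine T ts2 cs2 us by unfold_locales (use a2 us_s us_T set_us in auto)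
  define F where "F t = step_fun ts1 cs1 t - step_fun ts2 cs2 t" for t
  define m where "m = length us - 1"
  define V where "V = (\<Sum>j<m. (F (us!j))^2 * (us!Suc j - us!j))"
  have dj: "\<And>j. j < m \<Longrightarrow> 0 \<le> us!Suc j - us!j"
  proof -
    fix j assume "j < m"
    then have "Suc j < length us" unfolding m_def by linarith
    then show "0 \<le> us!Suc j - us!j" using sw_le[OF us_s, of j "Suc j"] by simp
  qed
  have V0: "V \<ge> 0" unfolding V_def
    by (intro sum_nonneg mult_nonneg_nonneg) (use dj in auto)
  have cF: "\<And>j t. Suc j < length us \<Longrightarrow> us!j \<le> t \<Longrightarrow> t < us!Suc j \<Longrightarrow> F t = F (us!j)"
  proof -
    fix j t assume h: "Suc j < length us" "us!j \<le> t" "t < us!Suc j"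
    have e1: "step_fun ts1 cs1 t = step_fun ts1 cs1 (us!j)" by (rule r1.const[OF h])
    have e2: "step_fun ts2 cs2 t = step_fun ts2 cs2 (us!j)" by (rule r2.const[OF h])
    show "F t = F (us!j)" unfolding F_def e1 e2 ..
  qed
  have int: "(\<integral>\<^sup>+ t. indicator {0..T} t * ennreal ((F t)^2) \<partial>lborel) = ennreal V"
  proof -
    have "(\<integral>\<^sup>+ t. indicator {0..T} t * ennreal ((F t)^2) \<partial>lborel)
        = (\<Sum>j<m. ennreal ((F (us!j))^2) * ennreal (us!Suc j - us!j))"
      unfolding m_def
    proof (rule step_integral[OF us_s lus h0 hT])
      fix j t assume "Suc j < length us" "us!j \<le> t" "t < us!Suc j"
      then have "F t = F (us!j)" by (rule cF)
      then show "ennreal ((F t)^2) = ennreal ((F (us!j))^2)" by simp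
    qed
    also have "\<dots> = (\<Sum>j<m. ennreal ((F (us!j))^2 * (us!Suc j - us!j)))"
      by (intro sum.cong refl) (simp add: ennreal_mult')
    also have "\<dots> = ennreal V" unfolding V_def
      by (rule sum_ennreal) (use dj in auto)
    finally show ?thesis .
  qed
  have sw: "step_wiener W ts1 cs1 \<omega> - step_wiener W ts2 cs2 \<omega> = (\<Sum>j<m. F (us!j) * (W (us!Suc j) \<omega> - W (us!j) \<omega>))" for \<omega>
    unfolding step_wiener_def r1.sum_refine[of "\<lambda>t. W t \<omega>"] r2.sum_refine[of "\<lambda>t. W t \<omega>"] F_def m_def
    by (simp add: sum_subtractf left_diff_distrib)
  have "(\<integral>\<^sup>+ \<omega>. ennreal (exp (lam * (step_wiener W ts1 cs1 \<omega> - step_wiener W ts2 cs2 \<omega>))) \<partial>P)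
      = (\<integral>\<^sup>+ \<omega>. ennreal (exp (\<Sum>j<length us - 1. (lam * F (us!j)) * (W (us!Suc j) \<omega> - W (us!j) \<omega>))) \<partial>P)"
    unfolding sw m_def by (simp add: sum_distrib_left mult.assoc)
  also have "\<dots> = ennreal (exp (\<Sum>j<length us - 1. (lam * F (us!j))^2 * (us!Suc j - us!j) / 2))"
    by (rule wiener_mgf[OF wp us_s]) (use us_T in auto)
  also have "(\<Sum>j<length us - 1. (lam * F (us!j))^2 * (us!Suc j - us!j) / 2) = lam^2 / 2 * V"
    unfolding V_def m_def sum_distrib_left by (intro sum.cong refl) (simp add: power_mult_distrib field_simps)
  finally show ?thesis using int V0 unfolding F_def by blast
qed

lemma L2_ae_subseq:
  fixes D :: "nat \<Rightarrow> 'a \<Rightarrow> real"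
  assumes meas: "\<And>n. D n \<in> borel_measurable M"
    and lim: "(\<lambda>n. \<integral>\<^sup>+ x. ennreal ((D n x)^2) \<partial>M) \<longlonglongrightarrow> 0"
  shows "\<exists>r. (\<forall>k. k \<le> r k) \<and> (AE x in M. (\<lambda>k. D (r k) x) \<longlonglongrightarrow> 0)"
proof -
  have "\<forall>k. \<exists>n. k \<le> n \<and> (\<integral>\<^sup>+ x. ennreal ((D n x)^2) \<partial>M) \<le> ennreal ((1/2)^k)"
  proof
    fix k :: nat
    have "(0::ennreal) < ennreal ((1/2)^k)" by simp
    then have "eventually (\<lambda>n. (\<integral>\<^sup>+ x. ennreal ((D n x)^2) \<partial>M) < ennreal ((1/2)^k)) sequentially"
      using order_tendstoD(2)[OF lim] by blast
    then obtain N where N: "\<And>n. n \<ge> N \<Longrightarrow> (\<integral>\<^sup>+ x. ennreal ((D n x)^2) \<partial>M) < ennreal ((1/2)^k)"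
      unfolding eventually_sequentially by blast
    show "\<exists>n. k \<le> n \<and> (\<integral>\<^sup>+ x. ennreal ((D n x)^2) \<partial>M) \<le> ennreal ((1/2)^k)"
      using N[of "max k N"] by (intro exI[of _ "max k N"]) auto
  qed
  then obtain r where r: "\<And>k. k \<le> r k" "\<And>k. (\<integral>\<^sup>+ x. ennreal ((D (r k) x)^2) \<partial>M) \<le> ennreal ((1/2)^k)"
    by metis
  have "(\<integral>\<^sup>+ x. (\<Sum>k. ennreal ((D (r k) x)^2)) \<partial>M) = (\<Sum>k. \<integral>\<^sup>+ x. ennreal ((D (r k) x)^2) \<partial>M)"
    by (rule nn_integral_suminf) (use meas in simp)
  also have "\<dots> \<le> (\<Sum>k. ennreal ((1/2)^k))"
    by (intro suminf_le r(2)) auto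
  also have "\<dots> = ennreal (\<Sum>k. (1/2::real)^k)"
    by (rule suminf_ennreal2) (auto intro: summable_geometric)
  also have "\<dots> < \<infinity>" by simp
  finally have "(\<integral>\<^sup>+ x. (\<Sum>k. ennreal ((D (r k) x)^2)) \<partial>M) \<noteq> \<infinity>" by simp
  then have "AE x in M. (\<Sum>k. ennreal ((D (r k) x)^2)) \<noteq> \<infinity>"
    by (intro nn_integral_PInf_AE) (use meas in simp)
  then have "AE x in M. (\<lambda>k. D (r k) x) \<longlonglongrightarrow> 0"
  proof (rule AE_mp, intro AE_I2 impI)
    fix x assume "(\<Sum>k. ennreal ((D (r k) x)^2)) \<noteq> \<infinity>"
    then have "summable (\<lambda>k. (D (r k) x)^2)" by (intro summable_suminf_not_top) auto
    then have "(\<lambda>k. (D (r k) x)^2) \<longlonglongrightarrow> 0" by (rule summable_LIMSEQ_zero)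
    then have "(\<lambda>k. sqrt ((D (r k) x)^2)) \<longlonglongrightarrow> sqrt 0" by (rule tendsto_real_sqrt)
    then show "(\<lambda>k. D (r k) x) \<longlonglongrightarrow> 0" by (simp add: tendsto_rabs_zero_iff)
  qed
  then show ?thesis using r(1) by blast
qed

lemma ind_sq_meas:
  fixes g :: "real \<Rightarrow> real"
  assumes "(\<lambda>t. indicator A t *\<^sub>R g t) \<in> borel_measurable lborel"
  shows "(\<lambda>t. indicator A t * ennreal ((g t)^2)) \<in> borel_measurable (lborel :: real measure)"
proof -
  have "(\<lambda>t. ennreal ((indicator A t *\<^sub>R g t)^2)) \<in> borel_measurable lborel" using assms by measurable
  moreover have "(\<lambda>t. ennreal ((indicator A t *\<^sub>R g t)^2)) = (\<lambda>t. indicator A t * ennreal ((g t)^2))"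
    by (auto simp: indicator_def)
  ultimately show ?thesis by metis
qed

lemma set_meas_diff:
  fixes f g :: "real \<Rightarrow> real"
  assumes "set_borel_measurable (lborel::real measure) A f" "set_borel_measurable lborel A g"
  shows "(\<lambda>t. indicator A t *\<^sub>R (f t - g t)) \<in> borel_measurable lborel"
proof -
  have "(\<lambda>t. indicator A t *\<^sub>R f t - indicator A t *\<^sub>R g t) \<in> borel_measurable lborel"
    by (rule borel_measurable_diff) (use assms in \<open>simp_all add: set_borel_measurable_def\<close>)
  then show ?thesis by (simp add: algebra_simps)
qed

lemma step_fun_meas: "step_fun ts cs \<in> borel_measurable lborel"
  unfolding step_fun_def by measurable

lemma step_set_meas: "set_borel_measurable lborel {a..b::real} (step_fun ts cs)"
  unfolding set_borel_measurable_def
  by (rule borel_measurable_scaleR[OF _ step_fun_meas]) simp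

lemma enn_bound3:
  assumes "0 \<le> b" "0 \<le> c" "0 \<le> d" "a \<le> 2*b + 4*c + 4*d"
  shows "ennreal a \<le> 2 * ennreal b + 4 * ennreal c + 4 * ennreal d"
proof -
  have "ennreal a \<le> ennreal (2*b + 4*c + 4*d)" using assms by (intro ennreal_leI) 
  also have "\<dots> = 2 * ennreal b + 4 * ennreal c + 4 * ennreal d"
    using assms by (simp add: ennreal_plus ennreal_mult)
  finally show ?thesis .
qed

lemma enn_bound2:
  assumes "0 \<le> c" "0 \<le> d" "a \<le> 2*c + 2*d"
  shows "ennreal a \<le> 2 * ennreal c + 2 * ennreal d"
proof -
  have "ennreal a \<le> ennreal (2*c + 2*d)" using assms by (intro ennreal_leI)
  also have "\<dots> = 2 * ennreal c + 2 * ennreal d"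
    using assms by (simp add: ennreal_plus ennreal_mult)
  finally show ?thesis .
qed

lemma enn_combine:
  assumes "0 \<le> V" "0 < (\<delta>::real)"
  shows "2 * ennreal V + 4 * ennreal (\<delta>/4) + 4 * ennreal (\<delta>/4) = ennreal (2 * V + 2 * \<delta>)"
proof -
  have e1: "ennreal (2*V + 2*\<delta>) = ennreal (2*V) + ennreal (2*\<delta>)" by (rule ennreal_plus) (use assms in auto)
  have e2: "ennreal (2*\<delta>) = ennreal (4 * (\<delta>/4)) + ennreal (4 * (\<delta>/4))"
  proof -
    have "ennreal (2*\<delta>) = ennreal (\<delta> + \<delta>)" by (simp only: mult_2)
    also have "\<dots> = ennreal \<delta> + ennreal \<delta>" by (rule ennreal_plus) (use assms in auto)
    finally show ?thesis by simp
  qed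
  have e3: "ennreal (4 * (\<delta>/4)) = ennreal 4 * ennreal (\<delta>/4)" by (rule ennreal_mult) (use assms in auto)
  have e4: "ennreal (2*V) = ennreal 2 * ennreal V" by (rule ennreal_mult) (use assms in auto)
  have n: "ennreal 4 = 4" "ennreal 2 = 2" by simp_all
  show ?thesis unfolding e1 e2 e3 e4 n by (simp only: add.assoc)
qed

lemma sq_sum_le: "((a::real) + b)^2 \<le> 2*a^2 + 2*b^2"
proof -
  have "0 \<le> (a - b)^2" by simp
  then show ?thesis by (simp add: power2_eq_square algebra_simps)
qed

lemma sq_diff_le: "((a::real) - b)^2 \<le> 2*a^2 + 2*b^2"
proof -
  have "0 \<le> (a + b)^2" by simp
  then show ?thesis by (simp add: power2_eq_square algebra_simps)
qed

lemma wiener_gauss_bound: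
  fixes f1 f2 :: "real \<Rightarrow> real"
  assumes wp: "wiener_process P W"
    and wi1: "wiener_integral P W T f1 I1" and wi2: "wiener_integral P W T f2 I2"
    and m1: "set_borel_measurable lborel {0..T} f1" and m2: "set_borel_measurable lborel {0..T} f2"
    and hV: "(\<integral>\<^sup>+ t. indicator {0..T} t * ennreal ((f1 t - f2 t)^2) \<partial>lborel) \<le> ennreal V"
    and V0: "0 \<le> V" and d: "0 < \<delta>"
  shows "(\<integral>\<^sup>+ \<omega>. ennreal (exp (lam * (I1 \<omega> - I2 \<omega>))) \<partial>P) \<le> ennreal (exp (lam^2 * (V + \<delta>)))"
proof -
  have WM[measurable]: "\<And>t. W t \<in> borel_measurable P" using wp by (simp add: wiener_process_def)
  have sWm[measurable]: "\<And>ts cs. step_wiener W ts cs \<in> borel_measurable P"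
    unfolding step_wiener_def by measurable
  obtain tss1 css1 where adm1: "\<And>n. admissible_partition T (tss1 n) (css1 n)"
    and f1L: "(\<lambda>n. \<integral>\<^sup>+ t. indicator {0..T} t * ennreal ((step_fun (tss1 n) (css1 n) t - f1 t)^2) \<partial>lborel) \<longlonglongrightarrow> 0"
    and W1L: "(\<lambda>n. \<integral>\<^sup>+ \<omega>. ennreal ((step_wiener W (tss1 n) (css1 n) \<omega> - I1 \<omega>)^2) \<partial>P) \<longlonglongrightarrow> 0"
    and I1m[measurable]: "I1 \<in> borel_measurable P"
    using wi1 unfolding wiener_integral_def by blast
  obtain tss2 css2 where adm2: "\<And>n. admissible_partition T (tss2 n) (css2 n)"
    and f2L: "(\<lambda>n. \<integral>\<^sup>+ t. indicator {0..T} t * ennreal ((step_fun (tss2 n) (css2 n) t - f2 t)^2) \<partial>lborel) \<longlonglongrightarrow> 0"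
    and W2L: "(\<lambda>n. \<integral>\<^sup>+ \<omega>. ennreal ((step_wiener W (tss2 n) (css2 n) \<omega> - I2 \<omega>)^2) \<partial>P) \<longlonglongrightarrow> 0"
    and I2m[measurable]: "I2 \<in> borel_measurable P"
    using wi2 unfolding wiener_integral_def by blast
  define s1 where "s1 n = step_fun (tss1 n) (css1 n)" for n
  define s2 where "s2 n = step_fun (tss2 n) (css2 n)" for n
  define S where "S n \<omega> = step_wiener W (tss1 n) (css1 n) \<omega> - step_wiener W (tss2 n) (css2 n) \<omega>" for n \<omega>
  define a1 where "a1 n = (\<integral>\<^sup>+ t. indicator {0..T} t * ennreal ((s1 n t - f1 t)^2) \<partial>lborel)" for n
  define a2 where "a2 n = (\<integral>\<^sup>+ t. indicator {0..T} t * ennreal ((s2 n t - f2 t)^2) \<partial>lborel)" for n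
  define B where "B = (\<integral>\<^sup>+ t. indicator {0..T} t * ennreal ((f1 t - f2 t)^2) \<partial>lborel)"
  have Sm[measurable]: "\<And>n. S n \<in> borel_measurable P" unfolding S_def by measurable
  have ma1: "\<And>n. (\<lambda>t. indicator {0..T} t * ennreal ((s1 n t - f1 t)^2)) \<in> borel_measurable lborel"
    unfolding s1_def by (intro ind_sq_meas set_meas_diff step_set_meas m1)
  have ma2: "\<And>n. (\<lambda>t. indicator {0..T} t * ennreal ((s2 n t - f2 t)^2)) \<in> borel_measurable lborel"
    unfolding s2_def by (intro ind_sq_meas set_meas_diff step_set_meas m2)
  have mB: "(\<lambda>t. indicator {0..T} t * ennreal ((f1 t - f2 t)^2)) \<in> borel_measurable lborel"
    by (intro ind_sq_meas set_meas_diff m1 m2)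
  have bnd1: "(\<integral>\<^sup>+ t. indicator {0..T} t * ennreal ((s1 n t - s2 n t)^2) \<partial>lborel) \<le> 2 * B + 4 * a1 n + 4 * a2 n" for n
  proof -
    have "(\<integral>\<^sup>+ t. indicator {0..T} t * ennreal ((s1 n t - s2 n t)^2) \<partial>lborel)
      \<le> (\<integral>\<^sup>+ t. 2 * (indicator {0..T} t * ennreal ((f1 t - f2 t)^2)) + 4 * (indicator {0..T} t * ennreal ((s1 n t - f1 t)^2))
             + 4 * (indicator {0..T} t * ennreal ((s2 n t - f2 t)^2)) \<partial>lborel)"
    proof (rule nn_integral_mono)
      fix t
      have r: "(s1 n t - s2 n t)^2 \<le> 2 * (f1 t - f2 t)^2 + 4 * (s1 n t - f1 t)^2 + 4 * (s2 n t - f2 t)^2"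
      proof -
        have "(s1 n t - s2 n t)^2 = ((f1 t - f2 t) + ((s1 n t - f1 t) - (s2 n t - f2 t)))^2" by simp
        also have "\<dots> \<le> 2 * (f1 t - f2 t)^2 + 2 * ((s1 n t - f1 t) - (s2 n t - f2 t))^2"
          by (rule sq_sum_le)
        also have "((s1 n t - f1 t) - (s2 n t - f2 t))^2 \<le> 2 * (s1 n t - f1 t)^2 + 2 * (s2 n t - f2 t)^2"
          by (rule sq_diff_le)
        finally show ?thesis by simp
      qed
      show "indicator {0..T} t * ennreal ((s1 n t - s2 n t)^2) \<le> 2 * (indicator {0..T} t * ennreal ((f1 t - f2 t)^2)) + 4 * (indicator {0..T} t * ennreal ((s1 n t - f1 t)^2))
             + 4 * (indicator {0..T} t * ennreal ((s2 n t - f2 t)^2))"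
      proof (cases "t \<in> {0..T}")
        case True
        then show ?thesis using enn_bound3[OF _ _ _ r] by simp
      qed simp
    qed
    also have "\<dots> = 2 * B + 4 * a1 n + 4 * a2 n"
      unfolding B_def a1_def a2_def
      using ma1 ma2 mB by (simp add: nn_integral_add nn_integral_cmult)
    finally show ?thesis .
  qed
  have a1L: "a1 \<longlonglongrightarrow> 0" using f1L unfolding a1_def s1_def .
  have a2L: "a2 \<longlonglongrightarrow> 0" using f2L unfolding a2_def s2_def .
  have d4: "(0::ennreal) < ennreal (\<delta>/4)" using d by simp
  have ev: "eventually (\<lambda>n. a1 n < ennreal (\<delta>/4) \<and> a2 n < ennreal (\<delta>/4)) sequentially"
    using order_tendstoD(2)[OF a1L d4] order_tendstoD(2)[OF a2L d4] by (rule eventually_conj)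
  have stepb: "eventually (\<lambda>n. (\<integral>\<^sup>+ \<omega>. ennreal (exp (lam * S n \<omega>)) \<partial>P) \<le> ennreal (exp (lam^2 * (V + \<delta>)))) sequentially"
    using ev
  proof eventually_elim
    fix n assume an: "a1 n < ennreal (\<delta>/4) \<and> a2 n < ennreal (\<delta>/4)"
    obtain Vn where Vn: "Vn \<ge> 0" "(\<integral>\<^sup>+ t. indicator {0..T} t * ennreal ((s1 n t - s2 n t)^2) \<partial>lborel) = ennreal Vn"
      "(\<integral>\<^sup>+ \<omega>. ennreal (exp (lam * S n \<omega>)) \<partial>P) = ennreal (exp (lam^2 / 2 * Vn))"
      using step_gauss[OF wp adm1[of n] adm2[of n], of lam] unfolding s1_def s2_def S_def by blast
    have "ennreal Vn \<le> 2 * B + 4 * a1 n + 4 * a2 n" using bnd1[of n] Vn(2) by simp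
    also have "\<dots> \<le> 2 * ennreal V + 4 * ennreal (\<delta>/4) + 4 * ennreal (\<delta>/4)"
      using hV an unfolding B_def by (intro add_mono mult_left_mono) auto
    also have "\<dots> = ennreal (2 * V + 2 * \<delta>)"
      by (rule enn_combine[OF V0 d])
    finally have "ennreal Vn \<le> ennreal (2 * V + 2 * \<delta>)" .
    then have "Vn \<le> 2 * V + 2 * \<delta>" by (subst (asm) ennreal_le_iff) (use V0 d in auto)
    then have "lam^2 / 2 * Vn \<le> lam^2 / 2 * (2 * V + 2 * \<delta>)" by (intro mult_left_mono) auto
    then have "exp (lam^2 / 2 * Vn) \<le> exp (lam^2 * (V + \<delta>))" by (simp add: algebra_simps)
    then show "(\<integral>\<^sup>+ \<omega>. ennreal (exp (lam * S n \<omega>)) \<partial>P) \<le> ennreal (exp (lam^2 * (V + \<delta>)))"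
      using Vn(3) by simp
  qed
  define D where "D n \<omega> = S n \<omega> - (I1 \<omega> - I2 \<omega>)" for n \<omega>
  define e1 where "e1 n = (\<integral>\<^sup>+ \<omega>. ennreal ((step_wiener W (tss1 n) (css1 n) \<omega> - I1 \<omega>)^2) \<partial>P)" for n
  define e2 where "e2 n = (\<integral>\<^sup>+ \<omega>. ennreal ((step_wiener W (tss2 n) (css2 n) \<omega> - I2 \<omega>)^2) \<partial>P)" for n
  have Dm[measurable]: "\<And>n. D n \<in> borel_measurable P" unfolding D_def by measurable
  have bndD: "(\<integral>\<^sup>+ \<omega>. ennreal ((D n \<omega>)^2) \<partial>P) \<le> 2 * e1 n + 2 * e2 n" for n
  proof -
    have "(\<integral>\<^sup>+ \<omega>. ennreal ((D n \<omega>)^2) \<partial>P)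
       \<le> (\<integral>\<^sup>+ \<omega>. 2 * ennreal ((step_wiener W (tss1 n) (css1 n) \<omega> - I1 \<omega>)^2)
                 + 2 * ennreal ((step_wiener W (tss2 n) (css2 n) \<omega> - I2 \<omega>)^2) \<partial>P)"
    proof (rule nn_integral_mono)
      fix \<omega>
      have "(D n \<omega>)^2 = ((step_wiener W (tss1 n) (css1 n) \<omega> - I1 \<omega>) - (step_wiener W (tss2 n) (css2 n) \<omega> - I2 \<omega>))^2"
        unfolding D_def S_def by (simp add: algebra_simps)
      also have "\<dots> \<le> 2 * (step_wiener W (tss1 n) (css1 n) \<omega> - I1 \<omega>)^2 + 2 * (step_wiener W (tss2 n) (css2 n) \<omega> - I2 \<omega>)^2"
        by (rule sq_diff_le)
      finally show "ennreal ((D n \<omega>)^2) \<le> 2 * ennreal ((step_wiener W (tss1 n) (css1 n) \<omega> - I1 \<omega>)^2)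
                 + 2 * ennreal ((step_wiener W (tss2 n) (css2 n) \<omega> - I2 \<omega>)^2)"
        by (intro enn_bound2) auto
    qed
    also have "\<dots> = 2 * e1 n + 2 * e2 n"
      unfolding e1_def e2_def by (simp add: nn_integral_add nn_integral_cmult)
    finally show ?thesis .
  qed
  have DL: "(\<lambda>n. \<integral>\<^sup>+ \<omega>. ennreal ((D n \<omega>)^2) \<partial>P) \<longlonglongrightarrow> 0"
  proof (rule tendsto_sandwich[of "\<lambda>n. 0" _ _ "\<lambda>n. 2 * e1 n + 2 * e2 n"])
    show "\<forall>\<^sub>F n in sequentially. 0 \<le> (\<integral>\<^sup>+ \<omega>. ennreal ((D n \<omega>)^2) \<partial>P)" by simp
    show "\<forall>\<^sub>F n in sequentially. (\<integral>\<^sup>+ \<omega>. ennreal ((D n \<omega>)^2) \<partial>P) \<le> 2 * e1 n + 2 * e2 n"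
      using bndD by simp
    show "(\<lambda>n. 0::ennreal) \<longlonglongrightarrow> 0" by simp
    have "(\<lambda>n. 2 * e1 n + 2 * e2 n) \<longlonglongrightarrow> 2 * 0 + 2 * 0"
      by (intro tendsto_add ennreal_tendsto_cmult) (use W1L W2L in \<open>auto simp: e1_def e2_def\<close>)
    then show "(\<lambda>n. 2 * e1 n + 2 * e2 n) \<longlonglongrightarrow> 0" by simp
  qed
  obtain r where r: "\<And>k. k \<le> r k" and rae: "AE \<omega> in P. (\<lambda>k. D (r k) \<omega>) \<longlonglongrightarrow> 0"
    using L2_ae_subseq[OF Dm DL] by blast
  have "(\<integral>\<^sup>+ \<omega>. ennreal (exp (lam * (I1 \<omega> - I2 \<omega>))) \<partial>P)
      = (\<integral>\<^sup>+ \<omega>. liminf (\<lambda>k. ennreal (exp (lam * S (r k) \<omega>))) \<partial>P)"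
  proof (rule nn_integral_cong_AE)
    show "AE \<omega> in P. ennreal (exp (lam * (I1 \<omega> - I2 \<omega>))) = liminf (\<lambda>k. ennreal (exp (lam * S (r k) \<omega>)))"
      using rae
    proof eventually_elim
      fix \<omega> assume h: "(\<lambda>k. D (r k) \<omega>) \<longlonglongrightarrow> 0"
      have "(\<lambda>k. D (r k) \<omega> + (I1 \<omega> - I2 \<omega>)) \<longlonglongrightarrow> 0 + (I1 \<omega> - I2 \<omega>)"
        by (intro tendsto_add h tendsto_const)
      then have "(\<lambda>k. S (r k) \<omega>) \<longlonglongrightarrow> I1 \<omega> - I2 \<omega>" unfolding D_def by simp
      then have "(\<lambda>k. ennreal (exp (lam * S (r k) \<omega>))) \<longlonglongrightarrow> ennreal (exp (lam * (I1 \<omega> - I2 \<omega>)))"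
        by (intro tendsto_ennrealI tendsto_exp tendsto_mult tendsto_const)
      then show "ennreal (exp (lam * (I1 \<omega> - I2 \<omega>))) = liminf (\<lambda>k. ennreal (exp (lam * S (r k) \<omega>)))"
        by (intro lim_imp_Liminf[symmetric]) auto
    qed
  qed
  also have "\<dots> \<le> liminf (\<lambda>k. \<integral>\<^sup>+ \<omega>. ennreal (exp (lam * S (r k) \<omega>)) \<partial>P)"
    by (rule nn_integral_liminf) simp
  also have "\<dots> \<le> ennreal (exp (lam^2 * (V + \<delta>)))"
  proof (rule Liminf_le)
    obtain N where N: "\<And>n. n \<ge> N \<Longrightarrow> (\<integral>\<^sup>+ \<omega>. ennreal (exp (lam * S n \<omega>)) \<partial>P) \<le> ennreal (exp (lam^2 * (V + \<delta>)))"
      using stepb unfolding eventually_sequentially by blast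
    show "\<forall>\<^sub>F k in sequentially. (\<integral>\<^sup>+ \<omega>. ennreal (exp (lam * S (r k) \<omega>)) \<partial>P) \<le> ennreal (exp (lam^2 * (V + \<delta>)))"
      unfolding eventually_sequentially using N r order_trans by blast
  qed simp
  finally show ?thesis .
qed

lemma sm_times:
  fixes f g :: "real \<Rightarrow> real"
  assumes "set_borel_measurable lborel A f" "set_borel_measurable lborel A g"
  shows "set_borel_measurable lborel A (\<lambda>t. f t * g t)"
proof -
  have "(\<lambda>t. (indicator A t *\<^sub>R f t) * (indicator A t *\<^sub>R g t)) \<in> borel_measurable lborel"
    using assms unfolding set_borel_measurable_def by (rule borel_measurable_times)
  moreover have "(\<lambda>t. (indicator A t *\<^sub>R f t) * (indicator A t *\<^sub>R g t)) = (\<lambda>t. indicator A t *\<^sub>R (f t * g t))"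
    by (auto simp: indicator_def)
  ultimately show ?thesis unfolding set_borel_measurable_def by metis
qed

lemma sm_diff:
  fixes f g :: "real \<Rightarrow> real"
  assumes "set_borel_measurable lborel A f" "set_borel_measurable lborel A g"
  shows "set_borel_measurable lborel A (\<lambda>t. f t - g t)"
proof -
  have "(\<lambda>t. (indicator A t *\<^sub>R f t) - (indicator A t *\<^sub>R g t)) \<in> borel_measurable lborel"
    using assms unfolding set_borel_measurable_def by (rule borel_measurable_diff)
  moreover have "(\<lambda>t. (indicator A t *\<^sub>R f t) - (indicator A t *\<^sub>R g t)) = (\<lambda>t. indicator A t *\<^sub>R (f t - g t))"
    by (auto simp: indicator_def)
  ultimately show ?thesis unfolding set_borel_measurable_def by metis
qed

lemma sm_const: "set_borel_measurable lborel {a..b::real} (\<lambda>t. c::real)"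
  unfolding set_borel_measurable_def by (rule borel_measurable_scaleR) simp_all

lemma sm_ind: "set_borel_measurable lborel {a..b::real} (\<lambda>t. c * indicator {p..<q} t :: real)"
  unfolding set_borel_measurable_def by (rule borel_measurable_scaleR) simp_all

lemma si_const: "set_integrable lborel {a..b::real} (\<lambda>t. c::real)"
proof -
  have "integrable lborel (\<lambda>t. c * indicator {a..b} t)"
    by (rule borel_integrable_atLeastAtMost) simp
  then show ?thesis unfolding set_integrable_def by (simp add: mult.commute)
qed

lemma si_bound:
  fixes G F :: "real \<Rightarrow> real"
  assumes "set_integrable lborel A F" "set_borel_measurable lborel A G" "\<And>t. t \<in> A \<Longrightarrow> \<bar>G t\<bar> \<le> F t"
  shows "set_integrable lborel A G"
proof (rule set_integrable_bound[OF assms(1,2)])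
  show "AE x in lborel. x \<in> A \<longrightarrow> norm (G x) \<le> norm (F x)"
    using assms(3) by (intro AE_I2) force
qed

lemma cp_meas:
  assumes "set_borel_measurable lborel A h" "set_borel_measurable lborel A g"
  shows "set_borel_measurable lborel A (cp_model h g \<theta>)"
proof -
  have "(\<lambda>t. if t < \<theta> then indicator A t *\<^sub>R h t else indicator A t *\<^sub>R g t) \<in> borel_measurable lborel"
    using assms unfolding set_borel_measurable_def by measurable
  moreover have "(\<lambda>t. if t < \<theta> then indicator A t *\<^sub>R h t else indicator A t *\<^sub>R g t) = (\<lambda>t. indicator A t *\<^sub>R cp_model h g \<theta> t)"
    by (auto simp: cp_model_def)
  ultimately show ?thesis unfolding set_borel_measurable_def by metis
qed

lemma ind_integral:
  assumes "a \<le> p" "p \<le> q" "q \<le> b"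
  shows "set_integrable lborel {a..b} (\<lambda>t. c * indicator {p..<q} t :: real)"
    "(LINT t:{a..b}|lborel. c * indicator {p..<q} t :: real) = c * (q - p)"
proof -
  have eq: "(\<lambda>t. indicator {a..b} t *\<^sub>R (c * indicator {p..<q} t)) = (\<lambda>t. c * indicator {p..<q} t :: real)"
    using assms by (auto simp: indicator_def)
  have i: "integrable lborel (\<lambda>t. indicator {p..<q} t :: real)"
    using assms by (intro integrable_real_indicator) auto
  show "set_integrable lborel {a..b} (\<lambda>t. c * indicator {p..<q} t :: real)"
    unfolding set_integrable_def eq using i by simp
  show "(LINT t:{a..b}|lborel. c * indicator {p..<q} t :: real) = c * (q - p)"
    unfolding set_lebesgue_integral_def eq using assms by simp
qed

locale philoc =
  fixes T :: real and h g S0 :: "real \<Rightarrow> real" and Bm :: real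
  assumes mh: "set_borel_measurable lborel {0..T} h" and mg: "set_borel_measurable lborel {0..T} g"
    and mS: "set_borel_measurable lborel {0..T} S0" and iS: "set_integrable lborel {0..T} (\<lambda>t. (S0 t)^2)"
    and bh: "\<And>t. t \<in> {0..T} \<Longrightarrow> \<bar>h t\<bar> \<le> Bm" and bg: "\<And>t. t \<in> {0..T} \<Longrightarrow> \<bar>g t\<bar> \<le> Bm"
begin

abbreviation "M \<equiv> cp_model h g"

lemma mM: "set_borel_measurable lborel {0..T} (M \<theta>)" by (rule cp_meas[OF mh mg])

lemma bM: "t \<in> {0..T} \<Longrightarrow> \<bar>M \<theta> t\<bar> \<le> Bm"
  using bh bg by (simp add: cp_model_def)

lemma maj: "set_integrable lborel {0..T} (\<lambda>t. c + d * (S0 t)^2)"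
  by (intro set_integral_add(1) si_const set_integrable_mult_right iS)

lemma iM2: "set_integrable lborel {0..T} (\<lambda>t. (M \<theta> t)^2)"
proof (rule si_bound[OF maj[of "Bm^2" 0]])
  show "set_borel_measurable lborel {0..T} (\<lambda>t. (M \<theta> t)^2)"
    unfolding power2_eq_square by (intro sm_times mM)
  fix t assume t: "t \<in> {0..T}"
  have "\<bar>M \<theta> t\<bar> \<le> Bm" by (rule bM[OF t])
  then have "(M \<theta> t)^2 \<le> Bm^2" by (metis abs_ge_zero power2_abs power_mono)
  then show "\<bar>(M \<theta> t)^2\<bar> \<le> Bm^2 + 0 * (S0 t)^2" by simp
qed

lemma iMS: "set_integrable lborel {0..T} (\<lambda>t. M \<theta> t * S0 t)"
proof (rule si_bound[OF maj[of "Bm^2" 1]])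
  show "set_borel_measurable lborel {0..T} (\<lambda>t. M \<theta> t * S0 t)"
    by (intro sm_times mM mS)
  fix t assume t: "t \<in> {0..T}"
  have "\<bar>M \<theta> t\<bar> \<le> Bm" by (rule bM[OF t])
  then have a: "(M \<theta> t)^2 \<le> Bm^2" by (metis abs_ge_zero power2_abs power_mono)
  have "\<bar>M \<theta> t * S0 t\<bar> \<le> (M \<theta> t)^2 + (S0 t)^2"
  proof -
    have "0 \<le> (\<bar>M \<theta> t\<bar> - \<bar>S0 t\<bar>)^2" by simp
    also have "\<dots> = (M \<theta> t)^2 + (S0 t)^2 - 2 * (\<bar>M \<theta> t\<bar> * \<bar>S0 t\<bar>)"
      by (simp add: power2_diff)
    finally have "2 * (\<bar>M \<theta> t\<bar> * \<bar>S0 t\<bar>) \<le> (M \<theta> t)^2 + (S0 t)^2" by simp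
    moreover have "0 \<le> \<bar>M \<theta> t\<bar> * \<bar>S0 t\<bar>" by simp
    ultimately have "\<bar>M \<theta> t\<bar> * \<bar>S0 t\<bar> \<le> (M \<theta> t)^2 + (S0 t)^2" by linarith
    then show ?thesis by (simp add: abs_mult)
  qed
  then show "\<bar>M \<theta> t * S0 t\<bar> \<le> Bm^2 + 1 * (S0 t)^2" using a by simp
qed

lemma iMS2: "set_integrable lborel {0..T} (\<lambda>t. (M \<theta> t - S0 t)^2)"
proof -
  have "set_integrable lborel {0..T} (\<lambda>t. (M \<theta> t)^2 - 2 * (M \<theta> t * S0 t) + (S0 t)^2)"
    by (intro set_integral_add(1) set_integral_diff(1) set_integrable_mult_right iM2 iMS iS)
  then show ?thesis by (simp add: power2_eq_square algebra_simps)
qed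

lemma Phi_expand:
  "Phi T h g S0 \<theta> = (LINT t:{0..T}|lborel. (M \<theta> t)^2) - 2 * (LINT t:{0..T}|lborel. M \<theta> t * S0 t)
     + (LINT t:{0..T}|lborel. (S0 t)^2)"
proof -
  have "Phi T h g S0 \<theta> = (LINT t:{0..T}|lborel. (M \<theta> t)^2 - 2 * (M \<theta> t * S0 t) + (S0 t)^2)"
    unfolding Phi_def by (simp add: power2_eq_square algebra_simps)
  also have "\<dots> = (LINT t:{0..T}|lborel. (M \<theta> t)^2 - 2 * (M \<theta> t * S0 t)) + (LINT t:{0..T}|lborel. (S0 t)^2)"
    by (intro set_integral_add(2) set_integral_diff(1) set_integrable_mult_right iM2 iMS iS)
  also have "(LINT t:{0..T}|lborel. (M \<theta> t)^2 - 2 * (M \<theta> t * S0 t)) = (LINT t:{0..T}|lborel. (M \<theta> t)^2) - (LINT t:{0..T}|lborel. 2 * (M \<theta> t * S0 t))"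
    by (intro set_integral_diff(2) set_integrable_mult_right iM2 iMS)
  finally show ?thesis by simp
qed

end

context philoc begin

definition psi :: "real \<Rightarrow> real" where "psi t = (h t - S0 t)^2 - (g t - S0 t)^2"

lemma Phi_diff:
  assumes "a \<le> b"
  shows "set_integrable lborel {0..T} (\<lambda>t. indicator {a..<b} t * psi t)"
    "Phi T h g S0 b - Phi T h g S0 a = (LINT t:{0..T}|lborel. indicator {a..<b} t * psi t)"
proof -
  have eq: "(\<lambda>t. (M b t - S0 t)^2 - (M a t - S0 t)^2) = (\<lambda>t. indicator {a..<b} t * psi t)"
    using assms by (auto simp: cp_model_def indicator_def psi_def)
  have "set_integrable lborel {0..T} (\<lambda>t. (M b t - S0 t)^2 - (M a t - S0 t)^2)"
    by (intro set_integral_diff(1) iMS2)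
  then show "set_integrable lborel {0..T} (\<lambda>t. indicator {a..<b} t * psi t)" unfolding eq .
  have "Phi T h g S0 b - Phi T h g S0 a = (LINT t:{0..T}|lborel. (M b t - S0 t)^2 - (M a t - S0 t)^2)"
    unfolding Phi_def by (intro set_integral_diff(2)[symmetric] iMS2)
  then show "Phi T h g S0 b - Phi T h g S0 a = (LINT t:{0..T}|lborel. indicator {a..<b} t * psi t)"
    unfolding eq .
qed

end

locale convloc = philoc +
  fixes \<alpha> \<beta> \<theta>h \<kappa> :: real and h' g' S0' :: "real \<Rightarrow> real"
  assumes a0: "0 \<le> \<alpha>" and ab: "\<alpha> < \<beta>" and bT: "\<beta> \<le> T" and th: "\<theta>h \<in> {\<alpha><..<\<beta>}"
    and minim: "\<forall>\<theta>\<in>{\<alpha><..<\<beta>}. \<theta> \<noteq> \<theta>h \<longrightarrow> Phi T h g S0 \<theta>h < Phi T h g S0 \<theta>"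
    and dh: "\<forall>t\<in>{\<alpha><..<\<beta>}. (h has_real_derivative h' t) (at t)"
    and dg: "\<forall>t\<in>{\<alpha><..<\<beta>}. (g has_real_derivative g' t) (at t)"
    and dS: "\<forall>t\<in>{\<alpha><..<\<beta>}. (S0 has_real_derivative S0' t) (at t)"
    and k0: "0 < \<kappa>" and kdd: "\<forall>\<theta>\<in>{\<alpha><..<\<beta>}. Phi_dd h h' g g' S0 S0' \<theta> \<ge> \<kappa>"
begin

lemma psi_deriv: "t \<in> {\<alpha><..<\<beta>} \<Longrightarrow> (psi has_real_derivative Phi_dd h h' g g' S0 S0' t) (at t)"
proof -
  assume t: "t \<in> {\<alpha><..<\<beta>}"
  have "((\<lambda>t. (h t - S0 t) * (h t - S0 t) - (g t - S0 t) * (g t - S0 t)) has_real_derivative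
     ((h' t - S0' t) * (h t - S0 t) + (h' t - S0' t) * (h t - S0 t) - ((g' t - S0' t) * (g t - S0 t) + (g' t - S0' t) * (g t - S0 t)))) (at t)"
    using dh dg dS t by (intro DERIV_diff DERIV_mult) auto
  then show ?thesis unfolding psi_def Phi_dd_def power2_eq_square by (simp add: algebra_simps)
qed

lemma psi_mono:
  assumes s: "s \<in> {\<alpha><..<\<beta>}" and t: "t \<in> {\<alpha><..<\<beta>}" and st: "s \<le> t"
  shows "psi t - psi s \<ge> \<kappa> * (t - s)"
proof -
  have "(\<lambda>x. psi x - \<kappa> * x) s \<le> (\<lambda>x. psi x - \<kappa> * x) t"
  proof (rule DERIV_nonneg_imp_nondecreasing[OF st])
    fix x assume x: "s \<le> x" "x \<le> t"
    then have xi: "x \<in> {\<alpha><..<\<beta>}" using s t by auto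
    have "((\<lambda>x. psi x - \<kappa> * x) has_real_derivative (Phi_dd h h' g g' S0 S0' x - \<kappa> * 1)) (at x)"
      by (intro DERIV_diff psi_deriv[OF xi] DERIV_cmult DERIV_ident)
    moreover have "Phi_dd h h' g g' S0 S0' x - \<kappa> * 1 \<ge> 0" using kdd xi by auto
    ultimately show "\<exists>y. ((\<lambda>x. psi x - \<kappa> * x) has_real_derivative y) (at x) \<and> 0 \<le> y" by blast
  qed
  then show ?thesis by (simp add: algebra_simps)
qed

end

context convloc begin

lemma psi_pos:
  assumes t: "t \<in> {\<alpha><..<\<beta>}" "\<theta>h < t"
  shows "psi t > 0"
proof -
  note P = Phi_diff[of \<theta>h t]
  have thl: "\<theta>h \<le> t" using t by simp
  have ii: "0 \<le> \<theta>h" "t \<le> T" using th t a0 bT by auto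
  have "Phi T h g S0 t - Phi T h g S0 \<theta>h = (LINT x:{0..T}|lborel. indicator {\<theta>h..<t} x * psi x)"
    by (rule P(2)[OF thl])
  also have "\<dots> \<le> (LINT x:{0..T}|lborel. psi t * indicator {\<theta>h..<t} x)"
  proof (rule set_integral_mono[OF P(1)[OF thl] ind_integral(1)])
    fix x assume x: "x \<in> {0..T}"
    show "indicator {\<theta>h..<t} x * psi x \<le> psi t * indicator {\<theta>h..<t} x"
    proof (cases "x \<in> {\<theta>h..<t}")
      case True
      then have xi: "x \<in> {\<alpha><..<\<beta>}" using th t by auto
      have "psi t - psi x \<ge> \<kappa> * (t - x)" using psi_mono[OF xi t(1)] True by auto
      moreover have "\<kappa> * (t - x) \<ge> 0" using k0 True by auto
      ultimately show ?thesis using True by simp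
    qed simp
  qed (use ii thl in auto)
  also have "\<dots> = psi t * (t - \<theta>h)" by (rule ind_integral(2)) (use ii thl in auto)
  finally have le: "Phi T h g S0 t - Phi T h g S0 \<theta>h \<le> psi t * (t - \<theta>h)" .
  have "Phi T h g S0 \<theta>h < Phi T h g S0 t" using minim t by auto
  with le have "0 < psi t * (t - \<theta>h)" by linarith
  then show ?thesis using t(2) by (simp add: zero_less_mult_iff)
qed

lemma psi_neg:
  assumes t: "t \<in> {\<alpha><..<\<beta>}" "t < \<theta>h"
  shows "psi t < 0"
proof -
  note P = Phi_diff[of t \<theta>h]
  have thl: "t \<le> \<theta>h" using t by simp
  have ii: "0 \<le> t" "\<theta>h \<le> T" using th t a0 bT by auto
  have "(LINT x:{0..T}|lborel. psi t * indicator {t..<\<theta>h} x) \<le> (LINT x:{0..T}|lborel. indicator {t..<\<theta>h} x * psi x)"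
  proof (rule set_integral_mono[OF ind_integral(1) P(1)[OF thl]])
    fix x assume x: "x \<in> {0..T}"
    show "psi t * indicator {t..<\<theta>h} x \<le> indicator {t..<\<theta>h} x * psi x"
    proof (cases "x \<in> {t..<\<theta>h}")
      case True
      then have xi: "x \<in> {\<alpha><..<\<beta>}" using th t by auto
      have "psi x - psi t \<ge> \<kappa> * (x - t)" using psi_mono[OF t(1) xi] True by auto
      moreover have "\<kappa> * (x - t) \<ge> 0" using k0 True by auto
      ultimately show ?thesis using True by simp
    qed simp
  qed (use ii thl in auto)
  also have "\<dots> = Phi T h g S0 \<theta>h - Phi T h g S0 t" by (rule P(2)[OF thl, symmetric])
  finally have le0: "(LINT x:{0..T}|lborel. psi t * indicator {t..<\<theta>h} x) \<le> Phi T h g S0 \<theta>h - Phi T h g S0 t" .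
  have i2: "(LINT x:{0..T}|lborel. psi t * indicator {t..<\<theta>h} x) = psi t * (\<theta>h - t)"
    by (rule ind_integral(2)) (use ii thl in auto)
  have le: "psi t * (\<theta>h - t) \<le> Phi T h g S0 \<theta>h - Phi T h g S0 t" using le0 i2 by linarith
  have "Phi T h g S0 \<theta>h < Phi T h g S0 t" using minim t by auto
  with le have "psi t * (\<theta>h - t) < 0" by linarith
  then show ?thesis using t(2) by (simp add: mult_less_0_iff)
qed

lemma Phi_convex:
  assumes \<theta>: "\<theta> \<in> {\<alpha><..<\<beta>}"
  shows "Phi T h g S0 \<theta> - Phi T h g S0 \<theta>h \<ge> \<kappa> / 8 * (\<theta> - \<theta>h)^2"
proof (cases "\<theta>h < \<theta>")
  case True
  define s where "s = \<theta>h + (\<theta> - \<theta>h) / 4"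
  define m where "m = \<theta>h + (\<theta> - \<theta>h) / 2"
  have si: "s \<in> {\<alpha><..<\<beta>}" "\<theta>h < s" "s \<le> m" "m \<le> \<theta>" "s \<le> \<theta>" using th \<theta> True by (auto simp: s_def m_def field_simps)
  have ii: "0 \<le> m" "\<theta> \<le> T" using si th \<theta> a0 bT by auto
  have Ps: "Phi T h g S0 \<theta>h \<le> Phi T h g S0 s" using minim si by force
  define c where "c = \<kappa> * (\<theta> - \<theta>h) / 4"
  have "c * (\<theta> - m) = (LINT x:{0..T}|lborel. c * indicator {m..<\<theta>} x)"
    by (rule ind_integral(2)[symmetric]) (use ii si in auto)
  also have "\<dots> \<le> (LINT x:{0..T}|lborel. indicator {s..<\<theta>} x * psi x)"
  proof (rule set_integral_mono[OF ind_integral(1) Phi_diff(1)[OF si(5)]])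
    fix x assume x: "x \<in> {0..T}"
    show "c * indicator {m..<\<theta>} x \<le> indicator {s..<\<theta>} x * psi x"
    proof (cases "x \<in> {s..<\<theta>}")
      case True
      then have xi: "x \<in> {\<alpha><..<\<beta>}" using si \<theta> by auto
      have px: "psi x > 0" using psi_pos[OF xi] True si by auto
      show ?thesis
      proof (cases "x \<in> {m..<\<theta>}")
        case True2: True
        have "psi x - psi s \<ge> \<kappa> * (x - s)" using psi_mono[OF si(1) xi] True by auto
        moreover have "psi s > 0" using psi_pos si by auto
        moreover have "\<kappa> * (x - s) \<ge> c"
        proof -
          have "x - s \<ge> (\<theta> - \<theta>h) / 4" using True2 by (auto simp: s_def m_def field_simps)
          then have "\<kappa> * (x - s) \<ge> \<kappa> * ((\<theta> - \<theta>h) / 4)" by (rule mult_left_mono) (use k0 in auto)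
          then show ?thesis unfolding c_def by simp
        qed
        ultimately show ?thesis using True True2 by simp
      qed (use True px in simp)
    next
      case False
      then have "x \<notin> {m..<\<theta>}" using si by auto
      then show ?thesis using False by simp
    qed
  qed (use ii si in auto)
  also have "\<dots> = Phi T h g S0 \<theta> - Phi T h g S0 s" by (rule Phi_diff(2)[OF si(5), symmetric])
  finally have "c * (\<theta> - m) \<le> Phi T h g S0 \<theta> - Phi T h g S0 s" .
  moreover have "c * (\<theta> - m) = \<kappa> / 8 * (\<theta> - \<theta>h)^2"
    unfolding c_def m_def by (simp add: power2_eq_square field_simps)
  ultimately show ?thesis using Ps by linarith
next
  case False
  show ?thesis
  proof (cases "\<theta> = \<theta>h")
    case True then show ?thesis by simp
  next
    case False2: False
    then have lt: "\<theta> < \<theta>h" using False by simp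
    define s where "s = \<theta>h - (\<theta>h - \<theta>) / 4"
    define m where "m = \<theta>h - (\<theta>h - \<theta>) / 2"
    have si: "s \<in> {\<alpha><..<\<beta>}" "s < \<theta>h" "m \<le> s" "\<theta> \<le> m" "\<theta> \<le> s" using th \<theta> lt by (auto simp: s_def m_def field_simps)
    have ii: "0 \<le> \<theta>" "s \<le> T" using si th \<theta> a0 bT by auto
    have Ps: "Phi T h g S0 \<theta>h \<le> Phi T h g S0 s" using minim si by force
    define c where "c = - (\<kappa> * (\<theta>h - \<theta>) / 4)"
    have "Phi T h g S0 s - Phi T h g S0 \<theta> = (LINT x:{0..T}|lborel. indicator {\<theta>..<s} x * psi x)"
      by (rule Phi_diff(2)[OF si(5)])
    also have "\<dots> \<le> (LINT x:{0..T}|lborel. c * indicator {\<theta>..<m} x)"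
    proof (rule set_integral_mono[OF Phi_diff(1)[OF si(5)] ind_integral(1)])
      fix x assume x: "x \<in> {0..T}"
      show "indicator {\<theta>..<s} x * psi x \<le> c * indicator {\<theta>..<m} x"
      proof (cases "x \<in> {\<theta>..<s}")
        case True
        then have xi: "x \<in> {\<alpha><..<\<beta>}" using si \<theta> by auto
        have px: "psi x < 0" using psi_neg[OF xi] True si by auto
        show ?thesis
        proof (cases "x \<in> {\<theta>..<m}")
          case True2: True
          have "psi s - psi x \<ge> \<kappa> * (s - x)" using psi_mono[OF xi si(1)] True by auto
          moreover have "psi s < 0" using psi_neg si by auto
          moreover have "\<kappa> * (s - x) \<ge> - c"
          proof -
            have "s - x \<ge> (\<theta>h - \<theta>) / 4" using True2 by (auto simp: s_def m_def field_simps)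
            then have "\<kappa> * (s - x) \<ge> \<kappa> * ((\<theta>h - \<theta>) / 4)" by (rule mult_left_mono) (use k0 in auto)
            then show ?thesis unfolding c_def by simp
          qed
          ultimately show ?thesis using True True2 by simp
        qed (use True px in simp)
      next
        case False
        then have "x \<notin> {\<theta>..<m}" using si by auto
        then show ?thesis using False by simp
      qed
    qed (use ii si in auto)
    also have "\<dots> = c * (m - \<theta>)" by (rule ind_integral(2)) (use ii si in auto)
    also have "c * (m - \<theta>) = - (\<kappa> / 8 * (\<theta> - \<theta>h)^2)"
      unfolding c_def m_def by (simp add: power2_eq_square field_simps)
    finally show ?thesis using Ps by linarith
  qed
qed

end

theorem lemma3:
  fixes P :: "'a measure" and W :: "real \<Rightarrow> 'a \<Rightarrow> real" and I :: "real \<Rightarrow> 'a \<Rightarrow> real"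
    and T \<alpha> \<beta> theta0 \<theta>h :: real
    and h g h' g' S0 S0' :: "real \<Rightarrow> real"
  assumes "0 < T" "0 < \<alpha>" "\<alpha> < \<beta>" "\<beta> < T"
    and "theta0 \<in> {\<alpha><..<\<beta>}"
    and "wiener_process P W"
    and "set_borel_measurable lborel {0..T} S0"
    and "set_integrable lborel {0..T} (\<lambda>t. (S0 t)^2)"
    and "set_borel_measurable lborel {0..T} h" "bounded (h ` {0..T})"
    and "set_borel_measurable lborel {0..T} g" "bounded (g ` {0..T})"
    and "\<forall>\<theta>. wiener_integral P W T (cp_model h g \<theta>) (I \<theta>)"
    and M1: "\<exists>\<kappa>>0. \<forall>t\<in>{\<alpha><..<\<beta>}. h t - g t \<ge> \<kappa>"
    and M2: "\<theta>h \<in> {\<alpha><..<\<beta>}"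
      "\<forall>\<theta>\<in>{\<alpha><..<\<beta>}. \<theta> \<noteq> \<theta>h \<longrightarrow> Phi T h g S0 \<theta>h < Phi T h g S0 \<theta>"
    and M3: "\<forall>t\<in>{\<alpha><..<\<beta>}. (h has_real_derivative h' t) (at t)" "continuous_on {\<alpha><..<\<beta>} h'"
      "\<forall>t\<in>{\<alpha><..<\<beta>}. (g has_real_derivative g' t) (at t)" "continuous_on {\<alpha><..<\<beta>} g'"
      "\<forall>t\<in>{\<alpha><..<\<beta>}. (S0 has_real_derivative S0' t) (at t)" "continuous_on {\<alpha><..<\<beta>} S0'"
    and M4: "\<exists>\<kappa>>0. \<forall>\<theta>\<in>{\<alpha><..<\<beta>}. Phi_dd h h' g g' S0 S0' \<theta> \<ge> \<kappa>"
  shows "\<forall>p>0. \<exists>c>0. \<exists>d>0. \<forall>\<epsilon>\<in>{0<..1}. \<forall>u.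
           (\<alpha> - \<theta>h) * \<epsilon> powr (-2/3) < u \<and> u < (\<beta> - \<theta>h) * \<epsilon> powr (-2/3) \<and> \<bar>u\<bar> \<ge> d \<longrightarrow>
           (\<integral>\<^sup>+ \<omega>. ennreal ((Z_hat T h g S0 \<epsilon> I \<theta>h u \<omega>) powr p) \<partial>P) \<le> ennreal (exp (- c * u^2))"
proof -
  have wp: "wiener_process P W" by (rule assms(6))
  have Pprob: "prob_space P" using wp by (simp add: wiener_process_def)
  obtain \<kappa> where k0: "\<kappa> > 0" and kdd: "\<forall>\<theta>\<in>{\<alpha><..<\<beta>}. Phi_dd h h' g g' S0 S0' \<theta> \<ge> \<kappa>" using M4 by blast
  obtain Bh where Bh: "\<forall>x\<in>h ` {0..T}. \<bar>x\<bar> \<le> Bh" using assms(10) unfolding bounded_real by blast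
  obtain Bg where Bg: "\<forall>x\<in>g ` {0..T}. \<bar>x\<bar> \<le> Bg" using assms(12) unfolding bounded_real by blast
  define Bm where "Bm = max (max Bh Bg) 1"
  have Bm1: "Bm \<ge> 1" unfolding Bm_def by simp
  have bh: "\<And>t. t \<in> {0..T} \<Longrightarrow> \<bar>h t\<bar> \<le> Bm"
  proof -
    fix t assume "t \<in> {0..T}"
    then have "\<bar>h t\<bar> \<le> Bh" using Bh by blast
    then show "\<bar>h t\<bar> \<le> Bm" unfolding Bm_def by linarith
  qed
  have bg: "\<And>t. t \<in> {0..T} \<Longrightarrow> \<bar>g t\<bar> \<le> Bm"
  proof -
    fix t assume "t \<in> {0..T}"
    then have "\<bar>g t\<bar> \<le> Bg" using Bg by blast
    then show "\<bar>g t\<bar> \<le> Bm" unfolding Bm_def by linarith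
  qed
  have a0: "0 \<le> \<alpha>" using assms(2) by simp
  have bT: "\<beta> \<le> T" using assms(4) by simp
  interpret cv: convloc T h g S0 Bm \<alpha> \<beta> \<theta>h \<kappa> h' g' S0'
    by unfold_locales (use assms(3,7,8,9,11) bh bg a0 bT M2 M3(1,3,5) k0 kdd in auto)
  show ?thesis
  proof (intro allI impI)
    fix p :: real assume p: "0 < p"
    define D where "D = 2 * Bm"
    have D0: "D > 0" using Bm1 unfolding D_def by simp
    define c where "c = p * \<kappa> / 32"
    define d where "d = 64 * p * D^2 / \<kappa>"
    have c0: "c > 0" unfolding c_def using p k0 by simp
    have d0: "d > 0" unfolding d_def using p k0 D0 by simp
    have main: "(\<integral>\<^sup>+ \<omega>. ennreal ((Z_hat T h g S0 \<epsilon> I \<theta>h u \<omega>) powr p) \<partial>P) \<le> ennreal (exp (- c * u^2))"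
      if e: "\<epsilon> \<in> {0<..1}" and uu: "(\<alpha> - \<theta>h) * \<epsilon> powr (-2/3) < u" "u < (\<beta> - \<theta>h) * \<epsilon> powr (-2/3)" "\<bar>u\<bar> \<ge> d"
      for \<epsilon> u
    proof -
      have e0: "0 < \<epsilon>" using e by simp
      define a where "a = \<epsilon> powr (2/3)"
      have apos: "0 < a" unfolding a_def using e0 by simp
      have inv: "\<epsilon> powr (-2/3) * a = 1" unfolding a_def using e0 by (simp add: powr_add[symmetric])
      have a3: "a^3 = \<epsilon>^2"
      proof -
        have "a^3 = \<epsilon> powr (of_nat 3 * (2/3))" unfolding a_def using e0 by (intro powr_power) simp
        also have "\<dots> = \<epsilon> powr 2" by simp
        also have "\<dots> = \<epsilon>^2" using e0 by simp
        finally show ?thesis .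
      qed
      define \<theta>u where "\<theta>u = \<theta>h + a * u"
      have lo: "\<alpha> - \<theta>h < a * u"
      proof -
        have "(\<alpha> - \<theta>h) * \<epsilon> powr (-2/3) * a < u * a" using uu(1) apos by (rule mult_strict_right_mono)
        moreover have "(\<alpha> - \<theta>h) * \<epsilon> powr (-2/3) * a = \<alpha> - \<theta>h" using inv by (simp only: mult.assoc) simp
        ultimately have "\<alpha> - \<theta>h < u * a" by linarith
        then show ?thesis by (simp add: mult.commute)
      qed
      have hi: "a * u < \<beta> - \<theta>h"
      proof -
        have "u * a < (\<beta> - \<theta>h) * \<epsilon> powr (-2/3) * a" using uu(2) apos by (rule mult_strict_right_mono)
        moreover have "(\<beta> - \<theta>h) * \<epsilon> powr (-2/3) * a = \<beta> - \<theta>h" using inv by (simp only: mult.assoc) simp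
        ultimately have "u * a < \<beta> - \<theta>h" by linarith
        then show ?thesis by (simp add: mult.commute)
      qed
      have \<theta>u_in: "\<theta>u \<in> {\<alpha><..<\<beta>}" using lo hi unfolding \<theta>u_def by auto
      have u0: "u \<noteq> 0" using uu(3) d0 by auto
      define lam where "lam = p * a / \<epsilon>"
      define A where "A = - (p * a / (2 * \<epsilon>^2)) * (Phi T h g S0 \<theta>u - Phi T h g S0 \<theta>h)"
      have ths: "\<theta>h + \<epsilon> powr (2/3) * u = \<theta>u" unfolding \<theta>u_def a_def ..
      have Im: "\<And>\<theta>. I \<theta> \<in> borel_measurable P" using assms(13) unfolding wiener_integral_def by blast
      have key: "(Z_hat T h g S0 \<epsilon> I \<theta>h u \<omega>) powr p = exp A * exp (lam * (I \<theta>u \<omega> - I \<theta>h \<omega>))" for \<omega>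
      proof -
        define Qu where "Qu = (LINT t:{0..T}|lborel. (cp_model h g \<theta>u t)^2)"
        define Q0 where "Q0 = (LINT t:{0..T}|lborel. (cp_model h g \<theta>h t)^2)"
        define Lu where "Lu = (LINT t:{0..T}|lborel. cp_model h g \<theta>u t * S0 t)"
        define L0 where "L0 = (LINT t:{0..T}|lborel. cp_model h g \<theta>h t * S0 t)"
        define C where "C = (LINT t:{0..T}|lborel. (S0 t)^2)"
        have Pu: "Phi T h g S0 \<theta>u = Qu - 2 * Lu + C" using cv.Phi_expand[of \<theta>u] unfolding Qu_def Lu_def C_def .
        have P0: "Phi T h g S0 \<theta>h = Q0 - 2 * L0 + C" using cv.Phi_expand[of \<theta>h] unfolding Q0_def L0_def C_def .
        define E1 where "E1 = 1 / \<epsilon>^2 * (Lu + \<epsilon> * I \<theta>u \<omega>) - 1 / (2 * \<epsilon>^2) * Qu"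
        define E0 where "E0 = 1 / \<epsilon>^2 * (L0 + \<epsilon> * I \<theta>h \<omega>) - 1 / (2 * \<epsilon>^2) * Q0"
        have Z: "Z_eps T h g S0 \<epsilon> I \<theta>h u \<omega> = exp (E1 - E0)"
          unfolding Z_eps_def pseudo_lik_def ths E1_def E0_def Qu_def Q0_def Lu_def L0_def by (simp add: exp_diff)
        have "(Z_hat T h g S0 \<epsilon> I \<theta>h u \<omega>) powr p = exp ((E1 - E0) * a * p)"
          unfolding Z_hat_def Z a_def[symmetric] by (simp add: exp_powr_real)
        also have "(E1 - E0) * a * p = A + lam * (I \<theta>u \<omega> - I \<theta>h \<omega>)"
          unfolding E1_def E0_def A_def lam_def Pu P0 using e0 by (simp add: field_simps power2_eq_square)
        finally show ?thesis by (simp add: exp_add)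
      qed
      define V where "V = D^2 * (a * \<bar>u\<bar>)"
      have V0: "0 < V" unfolding V_def using D0 apos u0 by simp
      have hV: "(\<integral>\<^sup>+ t. indicator {0..T} t * ennreal ((cp_model h g \<theta>u t - cp_model h g \<theta>h t)^2) \<partial>lborel) \<le> ennreal V"
      proof -
        define lo where "lo = min \<theta>u \<theta>h"
        define hi where "hi = max \<theta>u \<theta>h"
        have l1: "lo \<le> hi" unfolding lo_def hi_def by simp
        have l2: "hi - lo = a * \<bar>u\<bar>"
        proof (cases "0 \<le> u")
          case True
          then have "0 \<le> a * u" using apos by simp
          then show ?thesis unfolding lo_def hi_def \<theta>u_def using True by (simp add: max_def min_def)
        next
          case False
          then have "a * u < 0" using apos by (simp add: mult_pos_neg)
          then show ?thesis unfolding lo_def hi_def \<theta>u_def using False by (simp add: max_def min_def)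
        qed
        note lohi = l1 l2
        have "(\<integral>\<^sup>+ t. indicator {0..T} t * ennreal ((cp_model h g \<theta>u t - cp_model h g \<theta>h t)^2) \<partial>lborel)
            \<le> (\<integral>\<^sup>+ t. ennreal (D^2) * indicator {lo..<hi} t \<partial>lborel)"
        proof (rule nn_integral_mono)
          fix t
          show "indicator {0..T} t * ennreal ((cp_model h g \<theta>u t - cp_model h g \<theta>h t)^2) \<le> ennreal (D^2) * indicator {lo..<hi} t"
          proof (cases "t \<in> {lo..<hi}")
            case True
            show ?thesis
            proof (cases "t \<in> {0..T}")
              case True2: True
              have "\<bar>cp_model h g \<theta>u t - cp_model h g \<theta>h t\<bar> \<le> \<bar>cp_model h g \<theta>u t\<bar> + \<bar>cp_model h g \<theta>h t\<bar>"
                by (rule abs_triangle_ineq4)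
              also have "\<dots> \<le> D" using cv.bM[OF True2, of \<theta>u] cv.bM[OF True2, of \<theta>h] unfolding D_def by linarith
              finally have "(cp_model h g \<theta>u t - cp_model h g \<theta>h t)^2 \<le> D^2"
                by (metis abs_ge_zero power2_abs power_mono)
              then have "ennreal ((cp_model h g \<theta>u t - cp_model h g \<theta>h t)^2) \<le> ennreal (D^2)"
                by (rule ennreal_leI)
              then show ?thesis using True True2 by simp
            qed simp
          next
            case False
            then have "t < lo \<or> hi \<le> t" by auto
            then have "cp_model h g \<theta>u t = cp_model h g \<theta>h t" unfolding lo_def hi_def cp_model_def by auto
            then show ?thesis by simp
          qed
        qed
        also have "\<dots> = ennreal (D^2) * ennreal (hi - lo)"
          using lohi by (subst nn_integral_cmult_indicator) auto
        also have "\<dots> = ennreal V" unfolding V_def lohi(2) using D0 apos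
          by (simp add: ennreal_mult)
        finally show ?thesis .
      qed
      have gb: "(\<integral>\<^sup>+ \<omega>. ennreal (exp (lam * (I \<theta>u \<omega> - I \<theta>h \<omega>))) \<partial>P) \<le> ennreal (exp (lam^2 * (V + V)))"
        by (rule wiener_gauss_bound[OF wp _ _ cv.mM cv.mM hV]) (use assms(13) V0 in auto)
      have expo: "A + lam^2 * (V + V) \<le> - c * u^2"
      proof -
        have conv: "Phi T h g S0 \<theta>u - Phi T h g S0 \<theta>h \<ge> \<kappa> / 8 * (a * u)^2"
          using cv.Phi_convex[OF \<theta>u_in] unfolding \<theta>u_def by simp
        have cf: "0 \<le> p * a / (2 * \<epsilon>^2)" using p apos e0 by simp
        have A_le: "A \<le> - (p * a / (2 * \<epsilon>^2) * (\<kappa> / 8 * (a * u)^2))"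
          unfolding A_def using mult_left_mono[OF conv cf] by simp
        have r: "a^3 / \<epsilon>^2 = 1" using a3 e0 by simp
        have e1: "p * a / (2 * \<epsilon>^2) * (\<kappa> / 8 * (a * u)^2) = p * \<kappa> / 16 * u^2 * (a^3 / \<epsilon>^2)"
          using e0 by (simp add: field_simps power2_eq_square power3_eq_cube)
        have e2: "lam^2 * (V + V) = 2 * p^2 * D^2 * \<bar>u\<bar> * (a^3 / \<epsilon>^2)"
          unfolding lam_def V_def using e0 by (simp add: field_simps power2_eq_square power3_eq_cube)
        have dd: "(p * \<kappa> / 32) * d = 2 * p^2 * D^2" unfolding d_def using k0 by (simp add: field_simps power2_eq_square)
        have "d * \<bar>u\<bar> \<le> \<bar>u\<bar> * \<bar>u\<bar>" using uu(3) by (intro mult_right_mono) auto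
        then have "(p * \<kappa> / 32) * (d * \<bar>u\<bar>) \<le> (p * \<kappa> / 32) * (\<bar>u\<bar> * \<bar>u\<bar>)"
          by (intro mult_left_mono) (use p k0 in auto)
        moreover have "\<bar>u\<bar> * \<bar>u\<bar> = u^2" by (simp add: power2_eq_square abs_mult[symmetric])
        ultimately have q1: "(p * \<kappa> / 32) * (d * \<bar>u\<bar>) \<le> (p * \<kappa> / 32) * u^2" by simp
        have q2: "(p * \<kappa> / 32) * (d * \<bar>u\<bar>) = 2 * p^2 * D^2 * \<bar>u\<bar>" using dd by (metis mult.assoc)
        have "2 * p^2 * D^2 * \<bar>u\<bar> \<le> (p * \<kappa> / 32) * u^2" using q1 q2 by linarith
        then show ?thesis using A_le e1 e2 r unfolding c_def by simp
      qed
      have "(\<integral>\<^sup>+ \<omega>. ennreal ((Z_hat T h g S0 \<epsilon> I \<theta>h u \<omega>) powr p) \<partial>P)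
          = (\<integral>\<^sup>+ \<omega>. ennreal (exp A) * ennreal (exp (lam * (I \<theta>u \<omega> - I \<theta>h \<omega>))) \<partial>P)"
        by (intro nn_integral_cong) (simp add: key ennreal_mult)
      also have "\<dots> = ennreal (exp A) * (\<integral>\<^sup>+ \<omega>. ennreal (exp (lam * (I \<theta>u \<omega> - I \<theta>h \<omega>))) \<partial>P)"
        by (rule nn_integral_cmult) (use Im in measurable)
      also have "\<dots> \<le> ennreal (exp A) * ennreal (exp (lam^2 * (V + V)))"
        by (rule mult_left_mono[OF gb]) simp
      also have "\<dots> = ennreal (exp (A + lam^2 * (V + V)))" by (simp add: exp_add ennreal_mult)
      also have "\<dots> \<le> ennreal (exp (- c * u^2))" using expo by (intro ennreal_leI) simp
      finally show ?thesis .
    qed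
    show "\<exists>c>0. \<exists>d>0. \<forall>\<epsilon>\<in>{0<..1}. \<forall>u.
           (\<alpha> - \<theta>h) * \<epsilon> powr (-2/3) < u \<and> u < (\<beta> - \<theta>h) * \<epsilon> powr (-2/3) \<and> \<bar>u\<bar> \<ge> d \<longrightarrow>
           (\<integral>\<^sup>+ \<omega>. ennreal ((Z_hat T h g S0 \<epsilon> I \<theta>h u \<omega>) powr p) \<partial>P) \<le> ennreal (exp (- c * u^2))"
      using c0 d0 main by blast
  qed
qed

end
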